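(* Let $G=(X,b,m,c)$ be a weighted graph with $c=0$ and let $p\in(1,\infty)$. The following are equivalent: (i) $G$ is $p$-parabolic; (ii) $D^p=D_0^p$; (iii) $D^p\cap\ell^p(X,\mu)=D_0^p\cap\ell^p(X,\mu)$ for all measures $\mu\colon X\to(0,\infty)$; (iv) $1\in D_0^p$; (v) there is a sequence $(e_n)$ of finitely supported functions with $0\le e_n$, $e_n$ nondecreasing in $n$ and converging pointwise to $1$, and $\mathcal{E}_p(e_n)\to0$; (vi) there is a sequence $(e_n)$ of finitely supported functions with $e_n\to1$ pointwise and $\sup_n\mathcal{E}_p(e_n)<\infty$; (vii) there exist $u\in D_0^p$ and a finite set $K\subseteq X$ with $\inf_{x\in X\setminus K}u(x)>0$; (viii) the functionals $\mathcal{E}_p^{1/p}$ and $\|\cdot\|_{o,p}$ are not equivalent on the finitely supported functions for some (equivalently, all) $o\in X$.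
   Context: Weighted graph $G=(X,b,m,c)$: $X$ countably infinite; $b$ symmetric, nonnegative, zero on the diagonal, $\sum_yb(x,y)<\infty$; $m>0$; $c\ge0$; $x\sim y$ iff $b(x,y)>0$; $X$ connected. $\mathcal{E}_p(f)=\frac12\sum_{x,y}b(x,y)|f(x)-f(y)|^p+\sum_xc(x)|f(x)|^p$, $D^p=\{f:\mathcal{E}_p(f)<\infty\}$, $\|f\|_{o,p}=(\mathcal{E}_p(f)+|f(o)|^p)^{1/p}$, and $D_0^p$ is the closure of the finitely supported functions in $(D^p,\|\cdot\|_{o,p})$. $\ell^p(X,\mu)=\{f:\sum_x|f(x)|^p\mu(x)<\infty\}$. $G$ is $p$-parabolic if $\inf\{\mathcal{E}_p(\varphi):\varphi\text{ finitely supported},\varphi\ge1\text{ on }K\}=0$ for all finite $K$. *)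

theory Defs
  imports "HOL-Analysis.Analysis"
begin

definition weighted_graph ::
  "('x \<Rightarrow> 'x \<Rightarrow> real) \<Rightarrow> ('x \<Rightarrow> real) \<Rightarrow> ('x \<Rightarrow> real) \<Rightarrow> bool" where
  "weighted_graph b m c \<longleftrightarrow>
     countable (UNIV :: 'x set) \<and> infinite (UNIV :: 'x set) \<and>
     (\<forall>x y. b x y = b y x) \<and> (\<forall>x y. 0 \<le> b x y) \<and> (\<forall>x. b x x = 0) \<and>
     (\<forall>x. (\<lambda>y. b x y) summable_on UNIV) \<and>
     (\<forall>x. 0 < m x) \<and> (\<forall>x. 0 \<le> c x) \<and>
     (\<forall>x y. (x, y) \<in> {(x, y). 0 < b x y}\<^sup>*)"

definition fin_supp :: "('x \<Rightarrow> real) \<Rightarrow> bool" where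
  "fin_supp f \<longleftrightarrow> finite {x. f x \<noteq> 0}"

definition energy ::
  "('x \<Rightarrow> 'x \<Rightarrow> real) \<Rightarrow> ('x \<Rightarrow> real) \<Rightarrow> real \<Rightarrow> ('x \<Rightarrow> real) \<Rightarrow> ennreal" where
  "energy b c p f =
     infsum (\<lambda>(x, y). ennreal (b x y * \<bar>f x - f y\<bar> powr p)) UNIV / 2
     + infsum (\<lambda>x. ennreal (c x * \<bar>f x\<bar> powr p)) UNIV"

definition Dp :: "('x \<Rightarrow> 'x \<Rightarrow> real) \<Rightarrow> ('x \<Rightarrow> real) \<Rightarrow> real \<Rightarrow> ('x \<Rightarrow> real) set" where
  "Dp b c p = {f. energy b c p f < \<infinity>}"

text \<open>The norm \<open>\<parallel>f\<parallel>_{o,p}\<close> (meaningful for f in D^p, where the energy is finite).\<close>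
definition normo ::
  "('x \<Rightarrow> 'x \<Rightarrow> real) \<Rightarrow> ('x \<Rightarrow> real) \<Rightarrow> real \<Rightarrow> 'x \<Rightarrow> ('x \<Rightarrow> real) \<Rightarrow> real" where
  "normo b c p x0 f = (enn2real (energy b c p f) + \<bar>f x0\<bar> powr p) powr (1 / p)"

definition D0p ::
  "('x \<Rightarrow> 'x \<Rightarrow> real) \<Rightarrow> ('x \<Rightarrow> real) \<Rightarrow> real \<Rightarrow> 'x \<Rightarrow> ('x \<Rightarrow> real) set" where
  "D0p b c p x0 = {f \<in> Dp b c p. \<exists>\<phi>. (\<forall>n. fin_supp (\<phi> n)) \<and>
                    (\<lambda>n. normo b c p x0 (\<lambda>x. \<phi> n x - f x)) \<longlonglongrightarrow> 0}"

definition lp :: "real \<Rightarrow> ('x \<Rightarrow> real) \<Rightarrow> ('x \<Rightarrow> real) set" where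
  "lp p \<mu> = {f. (\<lambda>x. \<bar>f x\<bar> powr p * \<mu> x) summable_on UNIV}"

definition p_parabolic ::
  "('x \<Rightarrow> 'x \<Rightarrow> real) \<Rightarrow> ('x \<Rightarrow> real) \<Rightarrow> real \<Rightarrow> bool" where
  "p_parabolic b c p \<longleftrightarrow> (\<forall>K. finite K \<longrightarrow>
     (INF \<phi>\<in>{\<phi>. fin_supp \<phi> \<and> (\<forall>x\<in>K. 1 \<le> \<phi> x)}. energy b c p \<phi>) = 0)"

definition equiv_functionals ::
  "('x \<Rightarrow> 'x \<Rightarrow> real) \<Rightarrow> ('x \<Rightarrow> real) \<Rightarrow> real \<Rightarrow> 'x \<Rightarrow> bool" where
  "equiv_functionals b c p x0 \<longleftrightarrow> (\<exists>C1>0. \<exists>C2>0. \<forall>\<phi>. fin_supp \<phi> \<longrightarrow>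
      C1 * enn2real (energy b c p \<phi>) powr (1 / p) \<le> normo b c p x0 \<phi> \<and>
      normo b c p x0 \<phi> \<le> C2 * enn2real (energy b c p \<phi>) powr (1 / p))"

end

theory Submission
  imports Defs
begin

lemma ennreal_summable[simp]: "(f :: _ \<Rightarrow> ennreal) summable_on S"
  by (simp add: nonneg_summable_on_complete)

lemma ennreal_infsum_cmult: "infsum (\<lambda>x. c * f x) A = (c::ennreal) * infsum f A"
  by (simp add: nonneg_infsum_complete sum_distrib_left[symmetric] SUP_mult_left_ennreal)

locale wg =
  fixes b :: "'x \<Rightarrow> 'x \<Rightarrow> real" and p :: real
  assumes bsym: "\<And>x y. b x y = b y x"
    and bnn: "\<And>x y. 0 \<le> b x y"
    and bsum: "\<And>x. (\<lambda>y. b x y) summable_on UNIV"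
    and conn: "\<And>x y. (x, y) \<in> {(x, y). 0 < b x y}\<^sup>*"
    and p1: "1 < p"
    and cntbl: "countable (UNIV :: 'x set)"
begin

definition W :: "('x \<Rightarrow> real) \<Rightarrow> ennreal" where
  "W f = infsum (\<lambda>(x, y). ennreal (b x y * \<bar>f x - f y\<bar> powr p)) UNIV"

lemma W_lin_bound:
  assumes "\<And>x y. b x y * \<bar>h x - h y\<bar> powr p \<le>
       c1 * (b x y * \<bar>f x - f y\<bar> powr p) + c2 * (b x y * \<bar>g x - g y\<bar> powr p)"
    and "0 \<le> c1" "0 \<le> c2"
  shows "W h \<le> ennreal c1 * W f + ennreal c2 * W g"
proof -
  define F where "F = (\<lambda>(x, y). ennreal (b x y * \<bar>f x - f y\<bar> powr p))"
  define G where "G = (\<lambda>(x, y). ennreal (b x y * \<bar>g x - g y\<bar> powr p))"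
  define H where "H = (\<lambda>(x, y). ennreal (b x y * \<bar>h x - h y\<bar> powr p))"
  have WF: "W f = infsum F UNIV" "W g = infsum G UNIV" "W h = infsum H UNIV"
    unfolding W_def F_def G_def H_def by auto
  have "infsum H UNIV \<le> infsum (\<lambda>z. ennreal c1 * F z + ennreal c2 * G z) UNIV"
  proof (rule infsum_mono)
    fix z :: "'x \<times> 'x"
    obtain x y where z: "z = (x, y)" by fastforce
    have "0 \<le> b x y * \<bar>f x - f y\<bar> powr p" "0 \<le> b x y * \<bar>g x - g y\<bar> powr p"
      using bnn by auto
    then show "H z \<le> ennreal c1 * F z + ennreal c2 * G z"
      using assms(1)[of x y] assms(2,3) unfolding z F_def G_def H_def
      by (simp add: ennreal_mult'[symmetric] ennreal_plus[symmetric] del: ennreal_plus)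
  qed auto
  also have "\<dots> = infsum (\<lambda>z. ennreal c1 * F z) UNIV + infsum (\<lambda>z. ennreal c2 * G z) UNIV"
    by (rule infsum_add) auto
  also have "\<dots> = ennreal c1 * W f + ennreal c2 * W g"
    unfolding WF ennreal_infsum_cmult ..
  finally show ?thesis unfolding WF .
qed

lemma W_mono:
  assumes "\<And>x y. \<bar>g x - g y\<bar> \<le> \<bar>f x - f y\<bar>"
  shows "W g \<le> W f"
proof -
  have "W g \<le> ennreal 1 * W f + ennreal 0 * W f"
    by (rule W_lin_bound) (use assms bnn p1 in \<open>auto intro!: mult_left_mono powr_mono2\<close>)
  then show ?thesis by simp
qed

lemma pw_sum: "\<bar>a + c\<bar> powr p \<le> 2 powr p * (\<bar>a\<bar> powr p + \<bar>c::real\<bar> powr p)"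
proof -
  have "\<bar>a + c\<bar> \<le> 2 * max \<bar>a\<bar> \<bar>c\<bar>" by auto
  then have "\<bar>a + c\<bar> powr p \<le> (2 * max \<bar>a\<bar> \<bar>c\<bar>) powr p"
    using p1 by (intro powr_mono2) auto
  also have "\<dots> = 2 powr p * max \<bar>a\<bar> \<bar>c\<bar> powr p" by (simp add: powr_mult)
  also have "max \<bar>a\<bar> \<bar>c\<bar> powr p \<le> \<bar>a\<bar> powr p + \<bar>c\<bar> powr p"
    by (cases "\<bar>a\<bar> \<le> \<bar>c\<bar>") (auto simp: max_def)
  finally show ?thesis by (simp add: mult_left_mono)
qed

lemma W_add:
  "W (\<lambda>x. f x + g x) \<le> ennreal (2 powr p) * W f + ennreal (2 powr p) * W g"
proof (rule W_lin_bound)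
  fix x y
  have "\<bar>(f x + g x) - (f y + g y)\<bar> powr p \<le> 2 powr p * (\<bar>f x - f y\<bar> powr p + \<bar>g x - g y\<bar> powr p)"
    using pw_sum[of "f x - f y" "g x - g y"] by (simp add: algebra_simps)
  then have "b x y * \<bar>f x + g x - (f y + g y)\<bar> powr p \<le>
    b x y * (2 powr p * (\<bar>f x - f y\<bar> powr p + \<bar>g x - g y\<bar> powr p))"
    using bnn by (intro mult_left_mono) (auto simp: algebra_simps)
  then show "b x y * \<bar>f x + g x - (f y + g y)\<bar> powr p \<le>
    2 powr p * (b x y * \<bar>f x - f y\<bar> powr p) + 2 powr p * (b x y * \<bar>g x - g y\<bar> powr p)"
    by (simp add: algebra_simps)
qed auto

lemma W_diff:
  "W (\<lambda>x. f x - g x) \<le> ennreal (2 powr p) * W f + ennreal (2 powr p) * W g"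
proof (rule W_lin_bound)
  fix x y
  have "\<bar>(f x - g x) - (f y - g y)\<bar> powr p \<le> 2 powr p * (\<bar>f x - f y\<bar> powr p + \<bar>-(g x - g y)\<bar> powr p)"
    using pw_sum[of "f x - f y" "-(g x - g y)"] by (simp add: algebra_simps)
  then have "b x y * \<bar>f x - g x - (f y - g y)\<bar> powr p \<le>
    b x y * (2 powr p * (\<bar>f x - f y\<bar> powr p + \<bar>g x - g y\<bar> powr p))"
    using bnn by (intro mult_left_mono) (auto simp: algebra_simps abs_minus_commute)
  then show "b x y * \<bar>f x - g x - (f y - g y)\<bar> powr p \<le>
    2 powr p * (b x y * \<bar>f x - f y\<bar> powr p) + 2 powr p * (b x y * \<bar>g x - g y\<bar> powr p)"
    by (simp add: algebra_simps)
qed auto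

lemma W_scale: "W (\<lambda>x. t * f x) = ennreal (\<bar>t\<bar> powr p) * W f"
proof -
  have "W (\<lambda>x. t * f x) = infsum (\<lambda>z. ennreal (\<bar>t\<bar> powr p) *
      (case z of (x, y) \<Rightarrow> ennreal (b x y * \<bar>f x - f y\<bar> powr p))) UNIV"
    unfolding W_def
  proof (rule infsum_cong)
    fix z :: "'x \<times> 'x"
    obtain x y where z: "z = (x, y)" by fastforce
    have "\<bar>t * f x - t * f y\<bar> = \<bar>t\<bar> * \<bar>f x - f y\<bar>"
      by (simp add: abs_mult[symmetric] algebra_simps)
    then have "b x y * \<bar>t * f x - t * f y\<bar> powr p = \<bar>t\<bar> powr p * (b x y * \<bar>f x - f y\<bar> powr p)"
      by (simp add: powr_mult)
    then show "(case z of (x, y) \<Rightarrow> ennreal (b x y * \<bar>t * f x - t * f y\<bar> powr p)) =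
         ennreal (\<bar>t\<bar> powr p) * (case z of (x, y) \<Rightarrow> ennreal (b x y * \<bar>f x - f y\<bar> powr p))"
      unfolding z using bnn by (simp add: ennreal_mult'[symmetric])
  qed
  also have "\<dots> = ennreal (\<bar>t\<bar> powr p) * W f"
    unfolding W_def by (rule ennreal_infsum_cmult)
  finally show ?thesis .
qed

lemma W_cong_grad:
  assumes "\<And>x y. \<bar>g x - g y\<bar> = \<bar>f x - f y\<bar>"
  shows "W g = W f"
  using W_mono assms by (metis order.eq_iff order_refl)

lemma W_plus_const: "W (\<lambda>x. f x + k) = W f"
  by (rule W_cong_grad) simp

lemma W_const_minus: "W (\<lambda>x. k - f x) = W f"
  by (rule W_cong_grad) (simp add: abs_minus_commute)

lemma W_minus_const: "W (\<lambda>x. f x - k) = W f"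
  by (rule W_cong_grad) simp

lemma W_const: "W (\<lambda>x. k) = 0"
  unfolding W_def using p1 by (auto intro: infsum_0)

lemma W_single: "ennreal (b x y * \<bar>f x - f y\<bar> powr p) \<le> W f"
proof -
  have "infsum (\<lambda>(x, y). ennreal (b x y * \<bar>f x - f y\<bar> powr p)) {(x,y)} \<le> W f"
    unfolding W_def by (rule infsum_mono_neutral) auto
  then show ?thesis by simp
qed

end

lemma tendsto_abs_powr:
  fixes f :: "'a \<Rightarrow> real"
  assumes "(f \<longlongrightarrow> a) F" "0 < q"
  shows "((\<lambda>n. \<bar>f n\<bar> powr q) \<longlongrightarrow> \<bar>a\<bar> powr q) F"
  by (rule tendsto_powr') (use assms in \<open>auto intro: tendsto_rabs\<close>)

lemma infsum_dominated_0:
  fixes h :: "nat \<Rightarrow> 'a \<Rightarrow> ennreal"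
  assumes dom: "\<And>n z. h n z \<le> g z" and fin: "infsum g UNIV < \<infinity>"
    and lim: "\<And>z. (\<lambda>n. h n z) \<longlonglongrightarrow> 0"
  shows "(\<lambda>n. infsum (h n) UNIV) \<longlonglongrightarrow> 0"
proof (rule order_tendstoI)
  fix a :: ennreal assume "a < 0" then show "\<forall>\<^sub>F n in sequentially. a < infsum (h n) UNIV" by simp
next
  fix a :: ennreal assume a: "0 < a"
  obtain a2 :: ennreal where a2: "0 < a2" "a2 + a2 \<le> a"
  proof (cases "a = \<infinity>")
    case True then show ?thesis using that[of 1] by simp
  next
    case False
    then obtain t where t: "a = ennreal t" "0 \<le> t" by (cases a) auto
    then have "0 < t" using a by auto
    then show ?thesis using that[of "ennreal (t / 2)"] t
      by (simp add: ennreal_plus[symmetric] del: ennreal_plus)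
  qed
  have split: "infsum k UNIV = sum k F + infsum k (- F)" if F: "finite F" for k :: "'a \<Rightarrow> ennreal" and F
  proof -
    have "infsum k (F \<union> - F) = infsum k F + infsum k (- F)"
      by (rule infsum_Un_disjoint) auto
    then show ?thesis using F by simp
  qed
  obtain F where F: "finite F" and tail: "infsum g (- F) < a2"
  proof (rule ccontr)
    note th = that
    assume nt: "\<not> thesis"
    have ge: "a2 \<le> infsum g (- F)" if "finite F" for F
      using that th nt by (meson not_le)
    have "infsum g UNIV + a2 = (SUP F\<in>{F. finite F \<and> F \<subseteq> UNIV}. sum g F) + a2"
      by (subst nonneg_infsum_complete) auto
    also have "\<dots> = (SUP F\<in>{F. finite F \<and> F \<subseteq> UNIV}. sum g F + a2)"
      by (rule ennreal_SUP_add_left[symmetric]) auto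
    also have "\<dots> \<le> infsum g UNIV"
    proof (rule SUP_least)
      fix F :: "'a set" assume "F \<in> {F. finite F \<and> F \<subseteq> UNIV}"
      then have "finite F" by auto
      then show "sum g F + a2 \<le> infsum g UNIV"
        using split[of F g] ge[of F] by (simp add: add_left_mono)
    qed
    finally have "infsum g UNIV + a2 \<le> infsum g UNIV + 0" by simp
    then have "a2 \<le> 0" using fin by (auto simp: ennreal_add_left_cancel_le)
    then show False using a2 by simp
  qed
  have "(\<lambda>n. sum (h n) F) \<longlonglongrightarrow> sum (\<lambda>z. 0) F"
    by (intro tendsto_sum lim)
  then have "\<forall>\<^sub>F n in sequentially. sum (h n) F < a2"
    using a2(1) by (auto simp: order_tendsto_iff)
  then show "\<forall>\<^sub>F n in sequentially. infsum (h n) UNIV < a"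
  proof eventually_elim
    case (elim n)
    have "infsum (h n) UNIV = sum (h n) F + infsum (h n) (- F)" by (rule split[OF F])
    also have "infsum (h n) (- F) \<le> infsum g (- F)"
      by (rule infsum_mono) (auto intro: dom)
    finally have "infsum (h n) UNIV \<le> sum (h n) F + infsum g (- F)" by (simp add: add_left_mono)
    also have "\<dots> < a2 + a2" using elim tail by (rule add_strict_mono)
    finally show ?case using a2(2) by (rule order_less_le_trans)
  qed
qed

context wg
begin

lemma W_lsc:
  assumes lim: "\<And>x. (\<lambda>n. g n x) \<longlonglongrightarrow> f x"
    and ev: "eventually (\<lambda>n. W (g n) \<le> e) sequentially"
  shows "W f \<le> e"
  unfolding W_def
proof (rule infsum_le_finite_sums)
  fix F :: "('x \<times> 'x) set" assume F: "finite F"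
  define T where "T = (\<lambda>k (z::'x \<times> 'x). ennreal (b (fst z) (snd z) * \<bar>k (fst z) - k (snd z)\<bar> powr p))"
  have "(\<lambda>n. sum (T (g n)) F) \<longlonglongrightarrow> sum (T f) F"
    unfolding T_def using p1
    by (intro tendsto_sum tendsto_ennrealI tendsto_mult tendsto_const tendsto_abs_powr tendsto_diff lim) auto
  moreover have "eventually (\<lambda>n. sum (T (g n)) F \<le> e) sequentially"
    using ev
  proof eventually_elim
    case (elim n)
    have "sum (T (g n)) F = infsum (\<lambda>(x, y). ennreal (b x y * \<bar>g n x - g n y\<bar> powr p)) F"
      using F by (simp add: T_def case_prod_unfold)
    also have "\<dots> \<le> W (g n)" unfolding W_def by (rule infsum_mono_neutral) auto
    finally show ?case using elim by simp
  qed
  ultimately have "sum (T f) F \<le> e" by (rule tendsto_upperbound[of _ _ sequentially]) auto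
  then show "sum (\<lambda>(x, y). ennreal (b x y * \<bar>f x - f y\<bar> powr p)) F \<le> e"
    by (simp add: T_def case_prod_unfold)
qed auto

lemma path_bound: "\<exists>C>0. \<forall>f. ennreal (\<bar>f x - f y\<bar> powr p) \<le> ennreal C * W f"
proof -
  have "(x, y) \<in> {(x, y). 0 < b x y}\<^sup>*" by (rule conn)
  then show ?thesis
  proof (induction rule: rtrancl_induct)
    case base
    show ?case by (rule exI[of _ 1]) (use p1 in auto)
  next
    case (step y z)
    from step.IH obtain C where C: "C > 0" "\<And>f. ennreal (\<bar>f x - f y\<bar> powr p) \<le> ennreal C * W f"
      by blast
    have byz: "0 < b y z" using step.hyps(2) by simp
    define C' where "C' = 2 powr p * (C + 1 / b y z)"
    have "C' > 0" unfolding C'_def using C byz by (intro mult_pos_pos add_pos_pos) auto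
    moreover have "ennreal (\<bar>f x - f z\<bar> powr p) \<le> ennreal C' * W f" for f
    proof -
      have "\<bar>f x - f z\<bar> powr p \<le> 2 powr p * (\<bar>f x - f y\<bar> powr p + \<bar>f y - f z\<bar> powr p)"
        using pw_sum[of "f x - f y" "f y - f z"] by simp
      then have "ennreal (\<bar>f x - f z\<bar> powr p) \<le> ennreal (2 powr p) * (ennreal (\<bar>f x - f y\<bar> powr p)
          + ennreal (1 / b y z) * ennreal (b y z * \<bar>f y - f z\<bar> powr p))"
        using byz by (simp add: ennreal_mult'[symmetric] ennreal_plus[symmetric] del: ennreal_plus)
      also have "\<dots> \<le> ennreal (2 powr p) * (ennreal C * W f + ennreal (1 / b y z) * W f)"
        by (intro mult_left_mono add_mono C(2) W_single) auto
      also have "\<dots> = ennreal (2 powr p) * (ennreal (C + 1 / b y z) * W f)"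
        using C byz by (simp add: distrib_right ennreal_plus)
      also have "\<dots> = ennreal C' * W f"
        unfolding C'_def using C byz by (simp add: ennreal_mult mult.assoc)
      finally show ?thesis .
    qed
    ultimately show ?case by blast
  qed
qed

lemma W_max: "W (\<lambda>x. max (f x) (g x)) \<le> W f + W g"
proof -
  have "W (\<lambda>x. max (f x) (g x)) \<le> ennreal 1 * W f + ennreal 1 * W g"
  proof (rule W_lin_bound)
    fix x y
    have "\<bar>max (f x) (g x) - max (f y) (g y)\<bar> \<le> max \<bar>f x - f y\<bar> \<bar>g x - g y\<bar>" by auto
    then have "\<bar>max (f x) (g x) - max (f y) (g y)\<bar> powr p \<le> max \<bar>f x - f y\<bar> \<bar>g x - g y\<bar> powr p"
      using p1 by (intro powr_mono2) auto
    also have "\<dots> \<le> \<bar>f x - f y\<bar> powr p + \<bar>g x - g y\<bar> powr p" by (auto simp: max_def)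
    finally have "\<bar>max (f x) (g x) - max (f y) (g y)\<bar> powr p \<le> \<bar>f x - f y\<bar> powr p + \<bar>g x - g y\<bar> powr p" .
    then show "b x y * \<bar>max (f x) (g x) - max (f y) (g y)\<bar> powr p
      \<le> 1 * (b x y * \<bar>f x - f y\<bar> powr p) + 1 * (b x y * \<bar>g x - g y\<bar> powr p)"
    proof -
      have "b x y * \<bar>max (f x) (g x) - max (f y) (g y)\<bar> powr p
        \<le> b x y * (\<bar>f x - f y\<bar> powr p + \<bar>g x - g y\<bar> powr p)"
        using \<open>\<bar>max (f x) (g x) - max (f y) (g y)\<bar> powr p \<le> \<bar>f x - f y\<bar> powr p + \<bar>g x - g y\<bar> powr p\<close> bnn by (rule mult_left_mono)
      then show ?thesis by (simp add: distrib_left)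
    qed
  qed auto
  then show ?thesis by simp
qed

lemma W_fin:
  assumes "fin_supp f"
  shows "W f < \<infinity>"
proof -
  define S where "S = {x. f x \<noteq> 0}"
  have S: "finite S" using assms unfolding S_def fin_supp_def .
  define A where "A = 2 * (\<Sum>x\<in>S. \<bar>f x\<bar>)"
  define R where "R = (\<lambda>x. infsum (\<lambda>y. b x y) UNIV)"
  have fx: "\<bar>f x\<bar> \<le> (\<Sum>x\<in>S. \<bar>f x\<bar>)" for x
  proof (cases "x \<in> S")
    case True then show ?thesis using S by (intro member_le_sum) auto
  next
    case False then show ?thesis unfolding S_def by (auto intro: sum_nonneg)
  qed
  have A0: "0 \<le> A" unfolding A_def by (auto intro: sum_nonneg)
  have R0: "0 \<le> R x" for x unfolding R_def by (rule infsum_nonneg) (use bnn in auto)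
  have Rle: "sum (\<lambda>y. b x y) T \<le> R x" if "finite T" for x T
  proof -
    have "infsum (\<lambda>y. b x y) T \<le> R x" unfolding R_def
      by (rule infsum_mono_neutral) (use that bsum bnn in auto)
    then show ?thesis using that by simp
  qed
  have pt: "b x y * \<bar>f x - f y\<bar> powr p \<le> A powr p * (b x y * of_bool (x \<in> S) + b y x * of_bool (y \<in> S))"
    for x y
  proof (cases "x \<in> S \<or> y \<in> S")
    case True
    have "\<bar>f x - f y\<bar> \<le> A" using fx[of x] fx[of y] unfolding A_def by auto
    then have "\<bar>f x - f y\<bar> powr p \<le> A powr p" using p1 by (intro powr_mono2) auto
    then have "b x y * \<bar>f x - f y\<bar> powr p \<le> b x y * A powr p" using bnn by (intro mult_left_mono) auto
    also have "\<dots> \<le> A powr p * (b x y * of_bool (x \<in> S) + b y x * of_bool (y \<in> S))"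
      using True bnn[of x y] bsym[of x y] by (auto simp: algebra_simps)
    finally show ?thesis .
  next
    case False then show ?thesis using p1 bnn by (auto simp: S_def)
  qed
  have "W f \<le> ennreal (A powr p * (2 * (\<Sum>x\<in>S. R x)))"
    unfolding W_def
  proof (rule infsum_le_finite_sums)
    fix F :: "('x \<times> 'x) set" assume F: "finite F"
    let ?g = "\<lambda>z. b (fst z) (snd z) * of_bool (fst z \<in> S)"
    let ?h = "\<lambda>z. b (snd z) (fst z) * of_bool (snd z \<in> S)"
    have g0: "\<And>z. 0 \<le> ?g z" "\<And>z. 0 \<le> ?h z" using bnn by auto
    have FF: "finite (fst ` F \<times> snd ` F)" "F \<subseteq> fst ` F \<times> snd ` F" using F by force+
    have "sum ?g F \<le> sum ?g (fst ` F \<times> snd ` F)"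
      using FF g0 by (intro sum_mono2) auto
    also have "\<dots> = (\<Sum>x\<in>fst ` F. \<Sum>y\<in>snd ` F. ?g (x, y))"
      by (simp add: sum.cartesian_product case_prod_unfold)
    also have "\<dots> = (\<Sum>x\<in>fst ` F. of_bool (x \<in> S) * sum (\<lambda>y. b x y) (snd ` F))"
      by (simp add: sum_distrib_left mult.commute)
    also have "\<dots> \<le> (\<Sum>x\<in>fst ` F. of_bool (x \<in> S) * R x)"
      using F by (intro sum_mono mult_left_mono Rle) auto
    also have "\<dots> = (\<Sum>x\<in>fst ` F \<inter> S. R x)"
      using F by (auto simp: sum.inter_restrict of_bool_def intro!: sum.cong)
    also have "\<dots> \<le> (\<Sum>x\<in>S. R x)" using S R0 by (intro sum_mono2) auto
    finally have gF: "sum ?g F \<le> (\<Sum>x\<in>S. R x)" .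
    have "sum ?h F \<le> sum ?h (fst ` F \<times> snd ` F)"
      using FF g0 by (intro sum_mono2) auto
    also have "\<dots> = (\<Sum>x\<in>fst ` F. \<Sum>y\<in>snd ` F. ?h (x, y))"
      by (simp add: sum.cartesian_product case_prod_unfold)
    also have "\<dots> = (\<Sum>y\<in>snd ` F. \<Sum>x\<in>fst ` F. ?h (x, y))"
      by (rule sum.swap)
    also have "\<dots> = (\<Sum>y\<in>snd ` F. of_bool (y \<in> S) * sum (\<lambda>x. b y x) (fst ` F))"
      by (simp add: sum_distrib_left mult.commute)
    also have "\<dots> \<le> (\<Sum>y\<in>snd ` F. of_bool (y \<in> S) * R y)"
      using F by (intro sum_mono mult_left_mono Rle) auto
    also have "\<dots> = (\<Sum>x\<in>snd ` F \<inter> S. R x)"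
      using F by (auto simp: sum.inter_restrict of_bool_def intro!: sum.cong)
    also have "\<dots> \<le> (\<Sum>x\<in>S. R x)" using S R0 by (intro sum_mono2) auto
    finally have hF: "sum ?h F \<le> (\<Sum>x\<in>S. R x)" .
    have "sum (\<lambda>(x, y). ennreal (b x y * \<bar>f x - f y\<bar> powr p)) F
        = ennreal (\<Sum>z\<in>F. b (fst z) (snd z) * \<bar>f (fst z) - f (snd z)\<bar> powr p)"
      using bnn by (subst sum_ennreal[symmetric]) (auto simp: case_prod_unfold)
    also have "\<dots> \<le> ennreal (\<Sum>z\<in>F. A powr p * (?g z + ?h z))"
      by (intro ennreal_leI sum_mono pt)
    also have "\<dots> \<le> ennreal (A powr p * (2 * (\<Sum>x\<in>S. R x)))"
      using gF hF by (intro ennreal_leI) (auto simp: sum_distrib_left[symmetric] sum.distrib intro!: mult_left_mono)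
    finally show "sum (\<lambda>(x, y). ennreal (b x y * \<bar>f x - f y\<bar> powr p)) F
        \<le> ennreal (A powr p * (2 * (\<Sum>x\<in>S. R x)))" .
  qed auto
  then show ?thesis by (simp add: order_le_less_trans)
qed

end

lemma INF_zero_ennreal:
  assumes "\<And>e. 0 < e \<Longrightarrow> \<exists>x\<in>A. f x < (e::ennreal)"
  shows "(INF x\<in>A. f x) = 0"
proof (rule ccontr)
  assume "(INF x\<in>A. f x) \<noteq> 0"
  then have "0 < (INF x\<in>A. f x)" by (simp add: zero_less_iff_neq_zero)
  from assms[OF this] obtain x where "x \<in> A" "f x < (INF x\<in>A. f x)" by blast
  moreover have "(INF x\<in>A. f x) \<le> f x" using \<open>x \<in> A\<close> by (rule INF_lower)
  ultimately show False by simp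
qed

lemma fin_supp_scale: "fin_supp f \<Longrightarrow> fin_supp (\<lambda>x. t * f x)"
  unfolding fin_supp_def by (rule finite_subset) auto

lemma fin_supp_max: "fin_supp f \<Longrightarrow> fin_supp g \<Longrightarrow> fin_supp (\<lambda>x. max (f x) (g x))"
  unfolding fin_supp_def by (rule finite_subset[of _ "{x. f x \<noteq> 0} \<union> {x. g x \<noteq> 0}"]) (auto simp: max_def)

lemma fin_supp_mult: "fin_supp f \<Longrightarrow> fin_supp (\<lambda>x. g x * f x)"
  unfolding fin_supp_def by (rule finite_subset) auto

lemma fin_supp_clip: "fin_supp f \<Longrightarrow> fin_supp (\<lambda>x. min (max (f x) 0) 1)"
  unfolding fin_supp_def by (rule finite_subset) auto

lemma fin_supp_ind: "finite K \<Longrightarrow> fin_supp (\<lambda>x. of_bool (x \<in> K))"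
  unfolding fin_supp_def by (rule finite_subset) auto

context wg
begin

abbreviation "E \<equiv> energy b (\<lambda>_. 0) p"

lemma E_W: "E f = W f / 2"
  unfolding energy_def W_def by (simp add: infsum_0)

lemma E_fin: "fin_supp f \<Longrightarrow> E f < \<infinity>"
  using W_fin[of f] by (simp add: E_W ennreal_divide_eq_top_iff less_top[symmetric])

lemma E_lt_iff: "E f < e \<longleftrightarrow> W f < 2 * e"
  unfolding E_W by (subst divide_less_ennreal) (auto simp: mult.commute)

lemma core_parabolic:
  assumes fs: "\<And>n. fin_supp (\<phi> n)"
    and W0: "(\<lambda>n. W (\<phi> n)) \<longlonglongrightarrow> 0"
    and at_y: "(\<lambda>n. \<phi> n y) \<longlonglongrightarrow> 1"
  shows "p_parabolic b (\<lambda>_. 0) p"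
  unfolding p_parabolic_def
proof (intro allI impI INF_zero_ennreal)
  fix K :: "'x set" and e :: ennreal
  assume K: "finite K" and e: "0 < e"
  have conv: "(\<lambda>n. \<phi> n x) \<longlonglongrightarrow> 1" for x
  proof -
    obtain C where C: "C > 0" "\<And>f. ennreal (\<bar>f x - f y\<bar> powr p) \<le> ennreal C * W f"
      using path_bound[of x y] by blast
    have "(\<lambda>n. ennreal C * W (\<phi> n)) \<longlonglongrightarrow> ennreal C * 0"
      by (rule ennreal_tendsto_cmult[OF _ W0]) simp
    then have lim: "(\<lambda>n. ennreal C * W (\<phi> n)) \<longlonglongrightarrow> 0" by simp
    have "(\<lambda>n. ennreal (\<bar>\<phi> n x - \<phi> n y\<bar> powr p)) \<longlonglongrightarrow> 0"
    proof (rule tendsto_sandwich[of "\<lambda>_. 0" _ _ "\<lambda>n. ennreal C * W (\<phi> n)"])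
      show "\<forall>\<^sub>F n in sequentially. ennreal (\<bar>\<phi> n x - \<phi> n y\<bar> powr p) \<le> ennreal C * W (\<phi> n)"
        using C(2)[of "\<phi> _"] by simp
    qed (use lim in simp_all)
    then have "(\<lambda>n. \<bar>\<phi> n x - \<phi> n y\<bar> powr p) \<longlonglongrightarrow> 0"
      by (subst (asm) ennreal_tendsto_0_iff) auto
    from tendsto_zero_powrI[OF this tendsto_const, of "1/p"]
    have "(\<lambda>n. (\<bar>\<phi> n x - \<phi> n y\<bar> powr p) powr (1/p)) \<longlonglongrightarrow> 0"
      using p1 by auto
    then have "(\<lambda>n. \<bar>\<phi> n x - \<phi> n y\<bar>) \<longlonglongrightarrow> 0"
      using p1 by (simp add: powr_powr)
    then have "(\<lambda>n. \<phi> n x - \<phi> n y) \<longlonglongrightarrow> 0"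
      by (simp add: tendsto_rabs_zero_iff)
    from tendsto_add[OF this at_y] show ?thesis by simp
  qed
  have ev1: "eventually (\<lambda>n. \<forall>x\<in>K. 1/2 < \<phi> n x) sequentially"
    using K
  proof (rule eventually_ball_finite, intro ballI)
    fix x assume "x \<in> K"
    show "eventually (\<lambda>n. 1/2 < \<phi> n x) sequentially"
      by (rule order_tendstoD(1)[OF conv]) simp
  qed
  have "(\<lambda>n. ennreal (2 powr p) * W (\<phi> n)) \<longlonglongrightarrow> ennreal (2 powr p) * 0"
    by (rule ennreal_tendsto_cmult[OF _ W0]) simp
  then have ev2: "eventually (\<lambda>n. ennreal (2 powr p) * W (\<phi> n) < 2 * e) sequentially"
    using e by (intro order_tendstoD(2)) (auto simp: ennreal_zero_less_mult_iff)
  from eventually_conj[OF ev1 ev2] obtain N where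
    "\<And>n. n \<ge> N \<Longrightarrow> (\<forall>x\<in>K. 1/2 < \<phi> n x) \<and> ennreal (2 powr p) * W (\<phi> n) < 2 * e"
    unfolding eventually_sequentially by blast
  then obtain n where n: "\<forall>x\<in>K. 1/2 < \<phi> n x" "ennreal (2 powr p) * W (\<phi> n) < 2 * e"
    by blast
  define \<psi> where "\<psi> = (\<lambda>x. 2 * \<phi> n x)"
  have "fin_supp \<psi> \<and> (\<forall>x\<in>K. 1 \<le> \<psi> x)" using n(1) fs unfolding \<psi>_def
    by (auto intro: fin_supp_scale)
  moreover have "E \<psi> < e"
    unfolding E_lt_iff \<psi>_def W_scale using n(2) by simp
  ultimately show "\<exists>\<psi>\<in>{\<phi>. fin_supp \<phi> \<and> (\<forall>x\<in>K. 1 \<le> \<phi> x)}. E \<psi> < e" by blast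
qed

end

context wg
begin

lemma W_clip: "W (\<lambda>x. min (max (f x) 0) 1) \<le> W f"
  by (rule W_mono) auto

lemma Dp_iff: "f \<in> Dp b (\<lambda>_. 0) p \<longleftrightarrow> W f < \<infinity>"
  unfolding Dp_def E_W by (auto simp: ennreal_divide_eq_top_iff less_top[symmetric])

lemma para_step:
  assumes P: "p_parabolic b (\<lambda>_. 0) p" and K: "finite K" and eps: "0 < \<epsilon>"
  shows "\<exists>\<psi>. fin_supp \<psi> \<and> (\<forall>x. 0 \<le> \<psi> x \<and> \<psi> x \<le> 1) \<and> (\<forall>x\<in>K. \<psi> x = 1) \<and> W \<psi> < ennreal \<epsilon>"
proof -
  have I0: "(INF \<phi>\<in>{\<phi>. fin_supp \<phi> \<and> (\<forall>x\<in>K. 1 \<le> \<phi> x)}. E \<phi>) = 0"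
    using P K unfolding p_parabolic_def by blast
  have e2: "0 < ennreal (\<epsilon> / 2)" using eps by simp
  obtain \<phi> where \<phi>: "fin_supp \<phi>" "\<forall>x\<in>K. 1 \<le> \<phi> x" "E \<phi> < ennreal (\<epsilon> / 2)"
  proof -
    from I0 e2 have "(INF \<phi>\<in>{\<phi>. fin_supp \<phi> \<and> (\<forall>x\<in>K. 1 \<le> \<phi> x)}. E \<phi>) < ennreal (\<epsilon> / 2)"
      by simp
    then show ?thesis using that unfolding INF_less_iff by blast
  qed
  have "W \<phi> < 2 * ennreal (\<epsilon> / 2)" using \<phi>(3) by (simp add: E_lt_iff)
  also have "2 * ennreal (\<epsilon> / 2) = ennreal \<epsilon>"
  proof -
    have "ennreal 2 * ennreal (\<epsilon> / 2) = ennreal \<epsilon>" using eps by (subst ennreal_mult[symmetric]) auto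
    then show ?thesis by simp
  qed
  finally have W\<phi>: "W \<phi> < ennreal \<epsilon>" .
  define \<psi> where "\<psi> = (\<lambda>x. min (max (\<phi> x) 0) 1)"
  have "fin_supp \<psi>" unfolding \<psi>_def using \<phi>(1) by (rule fin_supp_clip)
  moreover have "W \<psi> < ennreal \<epsilon>" unfolding \<psi>_def using W_clip W\<phi> by (rule order_le_less_trans)
  moreover have "\<forall>x. 0 \<le> \<psi> x \<and> \<psi> x \<le> 1" "\<forall>x\<in>K. \<psi> x = 1"
    using \<phi>(2) unfolding \<psi>_def by auto
  ultimately show ?thesis by blast
qed

lemma para_seq:
  assumes P: "p_parabolic b (\<lambda>_. 0) p"
  shows "\<exists>e. (\<forall>n. fin_supp (e n)) \<and> (\<forall>n x. 0 \<le> e n x \<and> e n x \<le> 1)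
     \<and> (\<forall>n x. e n x \<le> e (Suc n) x) \<and> (\<forall>x. eventually (\<lambda>n. e n x = 1) sequentially)
     \<and> (\<forall>n. W (e n) < ennreal (1 / real (Suc n)))"
proof -
  define g where "g = from_nat_into (UNIV :: 'x set)"
  have g: "\<exists>k. g k = x" for x unfolding g_def using cntbl by (rule from_nat_into_surj) simp
  define PP where "PP = (\<lambda>n \<psi>. fin_supp \<psi> \<and> (\<forall>x. 0 \<le> \<psi> x \<and> \<psi> x \<le> 1)
      \<and> (\<forall>x\<in>g ` {..<n}. \<psi> x = 1) \<and> W \<psi> < ennreal (1 / real (Suc n)))"
  define QQ where "QQ = (\<lambda>(n::nat) (\<psi>::'x \<Rightarrow> real) \<psi>'. \<forall>x. \<psi> x \<le> \<psi>' x)"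
  have "\<exists>e. \<forall>n. PP n (e n) \<and> QQ n (e n) (e (Suc n))"
  proof (rule dependent_nat_choice)
    show "\<exists>x. PP 0 x" unfolding PP_def using para_step[OF P, of "{}" 1] by auto
  next
    fix \<psi> n assume "PP n \<psi>"
    then have fs: "fin_supp \<psi>" and b1: "\<forall>x. 0 \<le> \<psi> x \<and> \<psi> x \<le> 1" unfolding PP_def by auto
    have "finite (g ` {..<Suc n} \<union> {x. \<psi> x \<noteq> 0})" using fs unfolding fin_supp_def by simp
    from para_step[OF P this, of "1 / real (Suc (Suc n))"] obtain \<psi>' where
      \<psi>': "fin_supp \<psi>'" "\<forall>x. 0 \<le> \<psi>' x \<and> \<psi>' x \<le> 1" "\<forall>x\<in>g ` {..<Suc n} \<union> {x. \<psi> x \<noteq> 0}. \<psi>' x = 1"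
        "W \<psi>' < ennreal (1 / real (Suc (Suc n)))"
      by auto
    have "PP (Suc n) \<psi>'" unfolding PP_def using \<psi>' by auto
    moreover have "QQ n \<psi> \<psi>'" unfolding QQ_def
    proof
      fix x show "\<psi> x \<le> \<psi>' x" using \<psi>'(2,3) b1 by (cases "\<psi> x = 0") auto
    qed
    ultimately show "\<exists>\<psi>'. PP (Suc n) \<psi>' \<and> QQ n \<psi> \<psi>'" by blast
  qed
  then obtain e where e: "\<And>n. PP n (e n)" "\<And>n. QQ n (e n) (e (Suc n))" by blast
  have "eventually (\<lambda>n. e n x = 1) sequentially" for x
  proof -
    obtain k where k: "g k = x" using g by blast
    show ?thesis unfolding eventually_sequentially
    proof (intro exI allI impI)
      fix n assume "Suc k \<le> n"
      then have "x \<in> g ` {..<n}" using k by auto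
      then show "e n x = 1" using e(1)[of n] unfolding PP_def by auto
    qed
  qed
  then have ev: "\<forall>x. eventually (\<lambda>n. e n x = 1) sequentially" by blast
  have f1: "\<forall>n. fin_supp (e n)" and f2: "\<forall>n x. 0 \<le> e n x \<and> e n x \<le> 1"
    and f3: "\<forall>n. W (e n) < ennreal (1 / real (Suc n))"
    using e(1) unfolding PP_def by auto
  have f4: "\<forall>n x. e n x \<le> e (Suc n) x" using e(2) unfolding QQ_def by auto
  show ?thesis by (rule exI[of _ e], intro conjI f1 f2 f3 f4 ev)
qed

end

context wg
begin
lemma normo_tendsto:
  assumes "(\<lambda>n. W (h n)) \<longlonglongrightarrow> 0" "(\<lambda>n. h n x0) \<longlonglongrightarrow> 0"
  shows "(\<lambda>n. normo b (\<lambda>_. 0) p x0 (h n)) \<longlonglongrightarrow> 0"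
proof -
  have "(\<lambda>n. W (h n) * inverse 2) \<longlonglongrightarrow> 0 * inverse 2"
    by (rule tendsto_mult_ennreal[OF assms(1)]) auto
  then have "(\<lambda>n. E (h n)) \<longlonglongrightarrow> ennreal 0" by (simp add: E_W divide_ennreal_def)
  then have e: "(\<lambda>n. enn2real (E (h n))) \<longlonglongrightarrow> 0" by (rule tendsto_enn2real) simp
  have a: "(\<lambda>n. \<bar>h n x0\<bar> powr p) \<longlonglongrightarrow> \<bar>0\<bar> powr p"
    using p1 by (intro tendsto_abs_powr assms(2)) auto
  have "(\<lambda>n. enn2real (E (h n)) + \<bar>h n x0\<bar> powr p) \<longlonglongrightarrow> 0"
    using tendsto_add[OF e a] by simp
  then show ?thesis unfolding normo_def using p1
    by (intro tendsto_zero_powrI) auto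
qed

lemma normo_tendstoD:
  assumes lim: "(\<lambda>n. normo b (\<lambda>_. 0) p x0 (h n)) \<longlonglongrightarrow> 0" and fin: "\<And>n. W (h n) < \<infinity>"
  shows "(\<lambda>n. W (h n)) \<longlonglongrightarrow> 0" "(\<lambda>n. h n x0) \<longlonglongrightarrow> 0"
proof -
  define s where "s = (\<lambda>n. enn2real (E (h n)) + \<bar>h n x0\<bar> powr p)"
  have s0: "0 \<le> s n" for n unfolding s_def by auto
  have "(\<lambda>n. (normo b (\<lambda>_. 0) p x0 (h n)) powr p) \<longlonglongrightarrow> 0"
    using tendsto_zero_powrI[OF lim tendsto_const, of p] p1 unfolding normo_def by auto
  moreover have "(normo b (\<lambda>_. 0) p x0 (h n)) powr p = s n" for n
  proof -
    have "0 \<le> enn2real (E (h n)) + \<bar>h n x0\<bar> powr p" by simp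
    then show ?thesis unfolding normo_def s_def using p1 by (simp add: powr_powr)
  qed
  ultimately have s: "s \<longlonglongrightarrow> 0" by simp
  have e: "(\<lambda>n. enn2real (E (h n))) \<longlonglongrightarrow> 0"
  proof (rule tendsto_sandwich[of "\<lambda>_. 0" _ _ s])
    show "\<forall>\<^sub>F n in sequentially. enn2real (E (h n)) \<le> s n"
      unfolding s_def by (intro always_eventually allI) simp
  qed (use s in simp_all)
  have a: "(\<lambda>n. \<bar>h n x0\<bar> powr p) \<longlonglongrightarrow> 0"
  proof (rule tendsto_sandwich[of "\<lambda>_. 0" _ _ s])
    show "\<forall>\<^sub>F n in sequentially. \<bar>h n x0\<bar> powr p \<le> s n"
      unfolding s_def by (intro always_eventually allI) simp
  qed (use s in simp_all)
  have Efin: "E (h n) = ennreal (enn2real (E (h n)))" for n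
    using fin[of n] by (simp add: E_W ennreal_enn2real_if ennreal_divide_eq_top_iff)
  have "(\<lambda>n. ennreal (enn2real (E (h n)))) \<longlonglongrightarrow> ennreal 0"
    using e by (rule tendsto_ennrealI)
  then have "(\<lambda>n. E (h n)) \<longlonglongrightarrow> 0" using Efin by simp
  then have "(\<lambda>n. 2 * E (h n)) \<longlonglongrightarrow> 2 * 0" by (rule ennreal_tendsto_cmult[rotated]) simp
  moreover have "2 * E (h n) = W (h n)" for n
    unfolding E_W by (simp add: ennreal_times_divide mult.commute[of 2] mult_divide_eq_ennreal)
  ultimately show "(\<lambda>n. W (h n)) \<longlonglongrightarrow> 0" by simp
  from tendsto_zero_powrI[OF a tendsto_const, of "1/p"]
  have "(\<lambda>n. (\<bar>h n x0\<bar> powr p) powr (1/p)) \<longlonglongrightarrow> 0" using p1 by auto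
  then have "(\<lambda>n. \<bar>h n x0\<bar>) \<longlonglongrightarrow> 0" using p1 by (simp add: powr_powr)
  then show "(\<lambda>n. h n x0) \<longlonglongrightarrow> 0" by (simp add: tendsto_rabs_zero_iff)
qed

end

definition hfun :: "real \<Rightarrow> real \<Rightarrow> real" where
  "hfun p u = (1 + u powr p) / 2 - ((1 + u) / 2) powr p"

lemma hfun_deriv:
  assumes "0 < z"
  shows "DERIV (hfun p) z :> (p / 2 * z powr (p - 1) - p / 2 * ((1 + z) / 2) powr (p - 1))"
proof -
  have "DERIV (\<lambda>u. u powr p) z :> p * z powr (p - 1)" by (rule has_real_derivative_powr[OF assms])
  then have "DERIV (\<lambda>u. (1 + u powr p) / 2) z :> (0 + p * z powr (p - 1)) / 2"
    by (intro DERIV_cdivide DERIV_add DERIV_const)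
  moreover have "DERIV (\<lambda>u. ((1 + u) / 2) powr p) z :> p * ((1 + z) / 2) powr (p - 1) * ((0 + 1) / 2)"
  proof -
    have "DERIV (\<lambda>u. (1 + u) / 2) z :> (0 + 1) / 2"
      by (intro DERIV_cdivide DERIV_add DERIV_const DERIV_ident)
    moreover have "DERIV (\<lambda>w. w powr p) ((1 + z) / 2) :> p * ((1 + z) / 2) powr (p - 1)"
      using assms by (intro has_real_derivative_powr) auto
    ultimately show ?thesis by (rule DERIV_chain2[rotated])
  qed
  ultimately have "DERIV (\<lambda>u. (1 + u powr p) / 2 - ((1 + u) / 2) powr p) z :>
      (0 + p * z powr (p - 1)) / 2 - p * ((1 + z) / 2) powr (p - 1) * ((0 + 1) / 2)"
    by (rule DERIV_diff)
  then show ?thesis unfolding hfun_def by (simp add: algebra_simps)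
qed

lemma hfun_decr:
  assumes p: "1 < p" and s: "0 < s" "s < t" "t \<le> 1"
  shows "hfun p t < hfun p s"
proof -
  obtain z where z: "s < z" "z < t"
    "hfun p t - hfun p s = (t - s) * (p / 2 * z powr (p - 1) - p / 2 * ((1 + z) / 2) powr (p - 1))"
    using MVT2[OF s(2), of "hfun p" "\<lambda>z. p / 2 * z powr (p - 1) - p / 2 * ((1 + z) / 2) powr (p - 1)"]
      hfun_deriv s by force
  have "z powr (p - 1) < ((1 + z) / 2) powr (p - 1)"
    using z s p by (intro powr_less_mono2) auto
  then have "p / 2 * z powr (p - 1) - p / 2 * ((1 + z) / 2) powr (p - 1) < 0"
    using p by (simp add: algebra_simps)
  then have "(t - s) * (p / 2 * z powr (p - 1) - p / 2 * ((1 + z) / 2) powr (p - 1)) < 0"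
    using s by (intro mult_pos_neg) auto
  then show ?thesis using z(3) by simp
qed

lemma hfun_1: "hfun p 1 = 0"
  unfolding hfun_def by simp

lemma hfun_0:
  assumes "1 < p" shows "0 < hfun p 0"
proof -
  have "2 powr 1 < 2 powr p" using assms by (intro powr_less_mono) auto
  then have "(1/2) powr p < 1/2" by (simp add: powr_divide divide_less_eq)
  then show ?thesis unfolding hfun_def using assms by simp
qed

lemma hfun_pos:
  fixes p :: real
  assumes "1 < p" "0 \<le> u" "u < 1"
  shows "0 < hfun p u"
proof (cases "u = 0")
  case True then show ?thesis using hfun_0 assms by simp
next
  case False
  then have "hfun p 1 < hfun p u" using assms by (intro hfun_decr) auto
  then show ?thesis by (simp add: hfun_1)
qed

lemma hfun_nonneg:
  fixes p :: real
  assumes "1 < p" "0 \<le> u" "u \<le> 1"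
  shows "0 \<le> hfun p u"
  using hfun_pos[OF assms(1,2)] hfun_1[of p] assms by (cases "u = 1") force+

lemma norm_convex:
  fixes p :: real
  assumes "1 < p" "0 \<le> u" "u \<le> 1"
  shows "((1 + u) / 2) powr p \<le> (1 + u powr p) / 2"
  using hfun_nonneg[OF assms] unfolding hfun_def by simp

lemma norm_modulus:
  fixes p :: real
  assumes p: "1 < p" and d: "0 < d" "d \<le> 1/2"
  shows "\<exists>r>0. \<forall>s. -1 \<le> s \<longrightarrow> s \<le> 1 - d \<longrightarrow>
           \<bar>(1 + s) / 2\<bar> powr p \<le> (1 - r) * ((1 + \<bar>s\<bar> powr p) / 2)"
proof -
  define r1 where "r1 = 1 - 2 * (1/2) powr p"
  define r2 where "r2 = hfun p (1 - d)"
  have "2 powr 1 < 2 powr p" using p by (intro powr_less_mono) auto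
  then have "(1/2) powr p < 1/2" by (simp add: powr_divide divide_less_eq)
  then have r1: "0 < r1" unfolding r1_def by simp
  have r2: "0 < r2" unfolding r2_def using d p by (intro hfun_pos) auto
  define r where "r = min r1 r2"
  have r: "0 < r" using r1 r2 unfolding r_def by simp
  have main: "\<bar>(1 + s) / 2\<bar> powr p \<le> (1 - r) * ((1 + \<bar>s\<bar> powr p) / 2)"
    if s: "-1 \<le> s" "s \<le> 1 - d" for s
  proof (cases "s \<le> 0")
    case True
    have "\<bar>(1 + s) / 2\<bar> \<le> 1/2" using s True by auto
    then have "\<bar>(1 + s) / 2\<bar> powr p \<le> (1/2) powr p" using p by (intro powr_mono2) auto
    also have "\<dots> = (1 - r1) / 2" unfolding r1_def by simp
    also have "\<dots> \<le> (1 - r) / 2" unfolding r_def by simp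
    also have "\<dots> \<le> (1 - r) * ((1 + \<bar>s\<bar> powr p) / 2)"
    proof -
      have "r \<le> r1" unfolding r_def by simp
      moreover have "r1 \<le> 1" unfolding r1_def by simp
      ultimately have A: "0 \<le> 1 - r" by simp
      have B: "1 / 2 \<le> (1 + \<bar>s\<bar> powr p) / 2" by simp
      have "(1 - r) * (1/2) \<le> (1 - r) * ((1 + \<bar>s\<bar> powr p) / 2)"
        by (rule mult_left_mono[OF B A])
      then show ?thesis by simp
    qed
    finally show ?thesis .
  next
    case False
    then have s0: "0 < s" by simp
    have "r2 \<le> hfun p s"
    proof (cases "s = 1 - d")
      case True then show ?thesis unfolding r2_def by simp
    next
      case False
      then show ?thesis unfolding r2_def using s s0 d p by (intro less_imp_le hfun_decr) auto
    qed
    then have "((1 + s) / 2) powr p \<le> (1 + s powr p) / 2 - r2" unfolding hfun_def by simp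
    also have "\<dots> \<le> (1 + s powr p) / 2 - r * ((1 + s powr p) / 2)"
    proof -
      have "s powr p \<le> 1 powr p" using s s0 p d by (intro powr_mono2) auto
      then have "(1 + s powr p) / 2 \<le> 1" by simp
      then have "r * ((1 + s powr p) / 2) \<le> r * 1" using r by (intro mult_left_mono) auto
      also have "\<dots> \<le> r2" unfolding r_def by simp
      finally show ?thesis by simp
    qed
    also have "\<dots> = (1 - r) * ((1 + s powr p) / 2)" by (simp add: field_simps)
    finally show ?thesis using s0 by simp
  qed
  show ?thesis using r main by blast
qed


lemma pw_sum_gen:
  fixes p :: real assumes "0 \<le> p"
  shows "\<bar>a + c\<bar> powr p \<le> 2 powr p * (\<bar>a\<bar> powr p + \<bar>c::real\<bar> powr p)"
proof -
  have "\<bar>a + c\<bar> \<le> 2 * max \<bar>a\<bar> \<bar>c\<bar>" by auto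
  then have "\<bar>a + c\<bar> powr p \<le> (2 * max \<bar>a\<bar> \<bar>c\<bar>) powr p"
    using assms by (intro powr_mono2) auto
  also have "\<dots> = 2 powr p * max \<bar>a\<bar> \<bar>c\<bar> powr p" by (simp add: powr_mult)
  also have "max \<bar>a\<bar> \<bar>c\<bar> powr p \<le> \<bar>a\<bar> powr p + \<bar>c\<bar> powr p"
    by (cases "\<bar>a\<bar> \<le> \<bar>c\<bar>") (auto simp: max_def)
  finally show ?thesis by (simp add: mult_left_mono)
qed

lemma scale_facts:
  fixes a b p :: real
  assumes "a \<noteq> 0"
  defines "s \<equiv> b / a"
  shows "\<bar>(a + b) / 2\<bar> powr p = \<bar>a\<bar> powr p * \<bar>(1 + s) / 2\<bar> powr p"
    and "\<bar>b\<bar> powr p = \<bar>a\<bar> powr p * \<bar>s\<bar> powr p"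
    and "\<bar>a - b\<bar> = \<bar>a\<bar> * \<bar>1 - s\<bar>"
proof -
  have e: "(a + b) / 2 = a * ((1 + s) / 2)" using assms by (simp add: field_simps)
  show "\<bar>(a + b) / 2\<bar> powr p = \<bar>a\<bar> powr p * \<bar>(1 + s) / 2\<bar> powr p"
    unfolding e abs_mult by (rule powr_mult)
  have e2: "b = a * s" using assms by simp
  show "\<bar>b\<bar> powr p = \<bar>a\<bar> powr p * \<bar>s\<bar> powr p"
    by (subst e2, unfold abs_mult, rule powr_mult)
  have "a - b = a * (1 - s)" using assms by (simp add: field_simps)
  then show "\<bar>a - b\<bar> = \<bar>a\<bar> * \<bar>1 - s\<bar>" by (simp add: abs_mult)
qed

lemma gen_convex_aux:
  fixes a b p :: real
  assumes p: "1 < p" and ab: "\<bar>b\<bar> \<le> \<bar>a\<bar>"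
  shows "\<bar>(a + b) / 2\<bar> powr p \<le> (\<bar>a\<bar> powr p + \<bar>b\<bar> powr p) / 2"
proof (cases "a = 0")
  case True then show ?thesis using ab p by simp
next
  case False
  define s where "s = b / a"
  have sa: "\<bar>s\<bar> \<le> 1" unfolding s_def using ab False by (simp add: abs_divide divide_le_eq_1)
  have "\<bar>(1 + s) / 2\<bar> \<le> (1 + \<bar>s\<bar>) / 2" by auto
  then have "\<bar>(1 + s) / 2\<bar> powr p \<le> ((1 + \<bar>s\<bar>) / 2) powr p" using p by (intro powr_mono2) auto
  also have "\<dots> \<le> (1 + \<bar>s\<bar> powr p) / 2" using p sa by (intro norm_convex) auto
  finally have *: "\<bar>(1 + s) / 2\<bar> powr p \<le> (1 + \<bar>s\<bar> powr p) / 2" .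
  have "\<bar>(a + b) / 2\<bar> powr p = \<bar>a\<bar> powr p * \<bar>(1 + s) / 2\<bar> powr p"
    unfolding s_def using False by (rule scale_facts)
  also have "\<dots> \<le> \<bar>a\<bar> powr p * ((1 + \<bar>s\<bar> powr p) / 2)" using * by (intro mult_left_mono) auto
  also have "\<dots> = (\<bar>a\<bar> powr p + \<bar>a\<bar> powr p * \<bar>s\<bar> powr p) / 2" by (simp add: algebra_simps)
  also have "\<bar>a\<bar> powr p * \<bar>s\<bar> powr p = \<bar>b\<bar> powr p"
    unfolding s_def using False by (rule scale_facts(2)[symmetric])
  finally show ?thesis .
qed

lemma gen_convex:
  fixes a b p :: real
  assumes p: "1 < p"
  shows "\<bar>(a + b) / 2\<bar> powr p \<le> (\<bar>a\<bar> powr p + \<bar>b\<bar> powr p) / 2"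
proof (cases "\<bar>b\<bar> \<le> \<bar>a\<bar>")
  case True then show ?thesis using gen_convex_aux[OF p] by blast
next
  case False
  then have "\<bar>(b + a) / 2\<bar> powr p \<le> (\<bar>b\<bar> powr p + \<bar>a\<bar> powr p) / 2"
    using gen_convex_aux[OF p, of a b] by simp
  then show ?thesis by (simp add: add.commute)
qed

lemma gen_modulus:
  fixes p d :: real
  assumes p: "1 < p" and d: "0 < d" "d \<le> 1/2"
  shows "\<exists>r>0. \<forall>a b. d * max \<bar>a\<bar> \<bar>b\<bar> \<le> \<bar>a - b\<bar> \<longrightarrow>
           \<bar>(a + b) / 2\<bar> powr p \<le> (1 - r) * ((\<bar>a\<bar> powr p + \<bar>b\<bar> powr p) / 2)"
proof -
  obtain r where r: "r > 0" and rr: "\<And>s. -1 \<le> s \<Longrightarrow> s \<le> 1 - d \<Longrightarrow>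
           \<bar>(1 + s) / 2\<bar> powr p \<le> (1 - r) * ((1 + \<bar>s\<bar> powr p) / 2)"
    using norm_modulus[OF p d] by blast
  have aux: "\<bar>(a + b) / 2\<bar> powr p \<le> (1 - r) * ((\<bar>a\<bar> powr p + \<bar>b\<bar> powr p) / 2)"
    if ab: "\<bar>b\<bar> \<le> \<bar>a\<bar>" and dd: "d * max \<bar>a\<bar> \<bar>b\<bar> \<le> \<bar>a - b\<bar>" for a b
  proof (cases "a = 0")
    case True then show ?thesis using ab p by simp
  next
    case False
    define s where "s = b / a"
    have sa: "\<bar>s\<bar> \<le> 1" unfolding s_def using ab False by (simp add: abs_divide divide_le_eq_1)
    have "d * \<bar>a\<bar> \<le> \<bar>a\<bar> * \<bar>1 - s\<bar>"
      using dd ab scale_facts(3)[OF False, of b] unfolding s_def by (simp add: max_def)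
    then have "d \<le> \<bar>1 - s\<bar>" using False by (simp add: mult.commute)
    then have s1: "s \<le> 1 - d" using sa by auto
    have *: "\<bar>(1 + s) / 2\<bar> powr p \<le> (1 - r) * ((1 + \<bar>s\<bar> powr p) / 2)"
      using rr[OF _ s1] sa by auto
    have "\<bar>(a + b) / 2\<bar> powr p = \<bar>a\<bar> powr p * \<bar>(1 + s) / 2\<bar> powr p"
      unfolding s_def using False by (rule scale_facts)
    also have "\<dots> \<le> \<bar>a\<bar> powr p * ((1 - r) * ((1 + \<bar>s\<bar> powr p) / 2))"
      using * by (intro mult_left_mono) auto
    also have "\<dots> = (1 - r) * ((\<bar>a\<bar> powr p + \<bar>a\<bar> powr p * \<bar>s\<bar> powr p) / 2)"
      by (simp add: algebra_simps)
    also have "\<bar>a\<bar> powr p * \<bar>s\<bar> powr p = \<bar>b\<bar> powr p"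
      unfolding s_def using False by (rule scale_facts(2)[symmetric])
    finally show ?thesis .
  qed
  have "\<bar>(a + b) / 2\<bar> powr p \<le> (1 - r) * ((\<bar>a\<bar> powr p + \<bar>b\<bar> powr p) / 2)"
    if dd: "d * max \<bar>a\<bar> \<bar>b\<bar> \<le> \<bar>a - b\<bar>" for a b
  proof (cases "\<bar>b\<bar> \<le> \<bar>a\<bar>")
    case True then show ?thesis using aux dd by blast
  next
    case False
    have "\<bar>(b + a) / 2\<bar> powr p \<le> (1 - r) * ((\<bar>b\<bar> powr p + \<bar>a\<bar> powr p) / 2)"
      using False dd by (intro aux) (auto simp: max_def abs_minus_commute)
    then show ?thesis by (simp add: add.commute)
  qed
  then show ?thesis using r by blast
qed

lemma uc_pointwise:
  fixes p \<eta> :: real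
  assumes p: "1 < p" and eta: "0 < \<eta>"
  shows "\<exists>C>0. \<forall>a b. \<bar>a - b\<bar> powr p + C * \<bar>(a + b) / 2\<bar> powr p
      \<le> (C / 2 + \<eta>) * (\<bar>a\<bar> powr p + \<bar>b\<bar> powr p)"
proof -
  define d where "d = min (1/2) (\<eta> powr (1/p))"
  have d: "0 < d" "d \<le> 1/2" unfolding d_def using eta by auto
  have dp: "d powr p \<le> \<eta>"
  proof -
    have "d powr p \<le> (\<eta> powr (1/p)) powr p" unfolding d_def using p eta by (intro powr_mono2) auto
    also have "\<dots> = \<eta>" using p eta by (simp add: powr_powr)
    finally show ?thesis .
  qed
  obtain r where r: "r > 0" and rr: "\<And>a b. d * max \<bar>a\<bar> \<bar>b\<bar> \<le> \<bar>a - b\<bar> \<Longrightarrow>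
           \<bar>(a + b) / 2\<bar> powr p \<le> (1 - r) * ((\<bar>a\<bar> powr p + \<bar>b\<bar> powr p) / 2)"
    using gen_modulus[OF p d] by blast
  define C where "C = 2 * 2 powr p / r"
  have C: "C > 0" unfolding C_def using r by simp
  have Cr: "C * r / 2 = 2 powr p" unfolding C_def using r by simp
  have "\<bar>a - b\<bar> powr p + C * \<bar>(a + b) / 2\<bar> powr p \<le> (C / 2 + \<eta>) * (\<bar>a\<bar> powr p + \<bar>b\<bar> powr p)"
    for a b
  proof -
    define S where "S = \<bar>a\<bar> powr p + \<bar>b\<bar> powr p"
    have S0: "0 \<le> S" unfolding S_def by simp
    have conv: "C * \<bar>(a + b) / 2\<bar> powr p \<le> C * (S / 2)"
      unfolding S_def using gen_convex[OF p, of a b] C by (intro mult_left_mono) auto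
    show ?thesis
    proof (cases "d * max \<bar>a\<bar> \<bar>b\<bar> \<le> \<bar>a - b\<bar>")
      case True
      have "\<bar>a - b\<bar> powr p \<le> 2 powr p * S"
        unfolding S_def using pw_sum_gen[of p a "-b"] p by simp
      moreover have "C * \<bar>(a + b) / 2\<bar> powr p \<le> C * ((1 - r) * (S / 2))"
        unfolding S_def using rr[OF True] C by (intro mult_left_mono) auto
      ultimately have "\<bar>a - b\<bar> powr p + C * \<bar>(a + b) / 2\<bar> powr p
          \<le> 2 powr p * S + C * ((1 - r) * (S / 2))" by simp
      also have "\<dots> = C / 2 * S + (2 powr p - C * r / 2) * S"
        by (simp add: field_simps)
      also have "\<dots> = C / 2 * S" using Cr by simp
      also have "\<dots> \<le> (C / 2 + \<eta>) * S" using eta S0 by (simp add: algebra_simps)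
      finally show ?thesis unfolding S_def .
    next
      case False
      have "\<bar>a - b\<bar> powr p \<le> (d * max \<bar>a\<bar> \<bar>b\<bar>) powr p"
        using False p by (intro powr_mono2) auto
      also have "\<dots> = d powr p * max \<bar>a\<bar> \<bar>b\<bar> powr p" using d by (simp add: powr_mult)
      also have "\<dots> \<le> \<eta> * S"
      proof (rule mult_mono)
        show "max \<bar>a\<bar> \<bar>b\<bar> powr p \<le> S" unfolding S_def
          by (cases "\<bar>a\<bar> \<le> \<bar>b\<bar>") (auto simp: max_def)
      qed (use dp eta in auto)
      finally have "\<bar>a - b\<bar> powr p + C * \<bar>(a + b) / 2\<bar> powr p \<le> \<eta> * S + C * (S / 2)"
        using conv by simp
      also have "\<dots> = (C / 2 + \<eta>) * S" by (simp add: algebra_simps)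
      finally show ?thesis unfolding S_def .
    qed
  qed
  then show ?thesis using C by blast
qed


context wg
begin

lemma W_real: "W f < \<infinity> \<Longrightarrow> W f = ennreal (enn2real (W f))"
  by (simp add: less_top[symmetric])

lemma W_uc:
  assumes eta: "0 < \<eta>"
  shows "\<exists>C>0. \<forall>f g. W (\<lambda>x. f x - g x) + ennreal C * W (\<lambda>x. (f x + g x) / 2)
      \<le> ennreal (C / 2 + \<eta>) * (W f + W g)"
proof -
  obtain C where C: "C > 0" and pw: "\<And>a b. \<bar>a - b\<bar> powr p + C * \<bar>(a + b) / 2\<bar> powr p
      \<le> (C / 2 + \<eta>) * (\<bar>a\<bar> powr p + \<bar>b\<bar> powr p)"
    using uc_pointwise[OF p1 eta] by blast
  have "W (\<lambda>x. f x - g x) + ennreal C * W (\<lambda>x. (f x + g x) / 2)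
      \<le> ennreal (C / 2 + \<eta>) * (W f + W g)" for f g
  proof -
    define Fd where "Fd = (\<lambda>(x, y). ennreal (b x y * \<bar>(f x - g x) - (f y - g y)\<bar> powr p))"
    define Fm where "Fm = (\<lambda>(x, y). ennreal (b x y * \<bar>(f x + g x) / 2 - (f y + g y) / 2\<bar> powr p))"
    define Ff where "Ff = (\<lambda>(x, y). ennreal (b x y * \<bar>f x - f y\<bar> powr p))"
    define Fg where "Fg = (\<lambda>(x, y). ennreal (b x y * \<bar>g x - g y\<bar> powr p))"
    have WW: "W (\<lambda>x. f x - g x) = infsum Fd UNIV" "W (\<lambda>x. (f x + g x) / 2) = infsum Fm UNIV"
      "W f = infsum Ff UNIV" "W g = infsum Fg UNIV"
      unfolding W_def Fd_def Fm_def Ff_def Fg_def by auto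
    have "infsum Fd UNIV + ennreal C * infsum Fm UNIV = infsum (\<lambda>z. Fd z + ennreal C * Fm z) UNIV"
      by (subst infsum_add) (auto simp: ennreal_infsum_cmult)
    also have "\<dots> \<le> infsum (\<lambda>z. ennreal (C / 2 + \<eta>) * (Ff z + Fg z)) UNIV"
    proof (rule infsum_mono)
      fix z :: "'x \<times> 'x"
      obtain x y where z: "z = (x, y)" by fastforce
      define a where "a = f x - f y"
      define c where "c = g x - g y"
      have e1: "(f x - g x) - (f y - g y) = a - c" unfolding a_def c_def by simp
      have e2: "(f x + g x) / 2 - (f y + g y) / 2 = (a + c) / 2" unfolding a_def c_def by (simp add: field_simps)
      have "b x y * (\<bar>a - c\<bar> powr p + C * \<bar>(a + c) / 2\<bar> powr p)
          \<le> b x y * ((C / 2 + \<eta>) * (\<bar>a\<bar> powr p + \<bar>c\<bar> powr p))"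
        using pw bnn by (intro mult_left_mono) auto
      then have H: "b x y * \<bar>(f x - g x) - (f y - g y)\<bar> powr p
          + C * (b x y * \<bar>(f x + g x) / 2 - (f y + g y) / 2\<bar> powr p)
          \<le> (C / 2 + \<eta>) * (b x y * \<bar>f x - f y\<bar> powr p + b x y * \<bar>g x - g y\<bar> powr p)"
        unfolding e1 e2 a_def[symmetric] c_def[symmetric] by (simp add: algebra_simps)
      have "Fd z + ennreal C * Fm z = ennreal (b x y * \<bar>(f x - g x) - (f y - g y)\<bar> powr p
          + C * (b x y * \<bar>(f x + g x) / 2 - (f y + g y) / 2\<bar> powr p))"
        unfolding z Fd_def Fm_def using C bnn
        by (simp add: ennreal_mult'[symmetric] ennreal_plus[symmetric] del: ennreal_plus)
      also have "\<dots> \<le> ennreal ((C / 2 + \<eta>) * (b x y * \<bar>f x - f y\<bar> powr p + b x y * \<bar>g x - g y\<bar> powr p))"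
        using H by (rule ennreal_leI)
      also have "\<dots> = ennreal (C / 2 + \<eta>) * (Ff z + Fg z)"
        unfolding z Ff_def Fg_def using C eta bnn
        by (simp add: ennreal_mult'[symmetric] ennreal_plus[symmetric] del: ennreal_plus)
      finally show "Fd z + ennreal C * Fm z \<le> ennreal (C / 2 + \<eta>) * (Ff z + Fg z)" .
    qed auto
    also have "\<dots> = ennreal (C / 2 + \<eta>) * (infsum Ff UNIV + infsum Fg UNIV)"
      by (subst ennreal_infsum_cmult) (subst infsum_add, auto)
    finally show ?thesis unfolding WW .
  qed
  then show ?thesis using C by blast
qed


lemma bounded_seq_parabolic:
  assumes fs: "\<And>n. fin_supp (e n)" and conv: "\<And>x. (\<lambda>n. e n x) \<longlonglongrightarrow> 1"
    and bd: "\<And>n. W (e n) \<le> ennreal M" and M0: "0 \<le> M"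
  shows "p_parabolic b (\<lambda>_. 0) p"
proof -
  define g where "g = from_nat_into (UNIV :: 'x set)"
  have g: "\<exists>k. g k = x" for x unfolding g_def using cntbl by (rule from_nat_into_surj) simp
  define F where "F = (\<lambda>n. g ` {..<n})"
  have Ffin: "finite (F n)" for n unfolding F_def by simp
  have Fmono: "n \<le> m \<Longrightarrow> F n \<subseteq> F m" for n m unfolding F_def by auto
  have Fev: "eventually (\<lambda>n. x \<in> F n) sequentially" for x
  proof -
    obtain k where "g k = x" using g by blast
    then show ?thesis unfolding F_def eventually_sequentially by (intro exI[of _ "Suc k"]) auto
  qed
  define Adm where "Adm = (\<lambda>n. {\<phi>. fin_supp \<phi> \<and> (\<forall>x\<in>F n. 1 \<le> \<phi> x)})"
  define V where "V = (\<lambda>n. INF \<phi>\<in>Adm n. W \<phi>)"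
  define B where "B = 2 powr p * M"
  have B0: "0 \<le> B" unfolding B_def using M0 by simp
  have VB: "V n \<le> ennreal B" for n
  proof -
    have "eventually (\<lambda>m. \<forall>x\<in>F n. 1/2 < e m x) sequentially"
      using Ffin
    proof (rule eventually_ball_finite, intro ballI)
      fix x show "eventually (\<lambda>m. 1/2 < e m x) sequentially"
        by (rule order_tendstoD(1)[OF conv]) simp
    qed
    then obtain m where m: "\<forall>x\<in>F n. 1/2 < e m x" unfolding eventually_sequentially by blast
    have "(\<lambda>x. 2 * e m x) \<in> Adm n" unfolding Adm_def using m fs by (auto intro: fin_supp_scale)
    then have "V n \<le> W (\<lambda>x. 2 * e m x)" unfolding V_def by (rule INF_lower)
    also have "\<dots> = ennreal (2 powr p) * W (e m)" by (simp add: W_scale)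
    also have "\<dots> \<le> ennreal (2 powr p) * ennreal M" by (intro mult_left_mono bd) auto
    also have "\<dots> = ennreal B" unfolding B_def using M0 by (simp add: ennreal_mult)
    finally show ?thesis .
  qed
  have Vmono: "V n \<le> V m" if "n \<le> m" for n m
    unfolding V_def using Fmono[OF that] unfolding Adm_def by (intro INF_superset_mono) auto
  define v where "v = (\<lambda>n. enn2real (V n))"
  have Vv: "V n = ennreal (v n)" for n
  proof -
    have "V n < \<infinity>" using VB[of n] by (rule le_less_trans) simp
    then show ?thesis unfolding v_def by (simp add: less_top[symmetric])
  qed
  have v0: "0 \<le> v n" for n unfolding v_def by simp
  have vB: "v n \<le> B" for n using VB[of n] B0 unfolding Vv by simp
  have vmono: "v n \<le> v m" if "n \<le> m" for n m using Vmono[OF that] v0 unfolding Vv by simp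
  define L where "L = (SUP n. v n)"
  have bdd: "bdd_above (range v)" using vB by (intro bdd_aboveI[of _ B]) auto
  have vL: "v n \<le> L" for n unfolding L_def by (rule cSUP_upper[OF _ bdd]) simp
  have L0: "0 \<le> L" using v0[of 0] vL[of 0] by simp
  have Lapprox: "\<exists>N. L - \<epsilon> < v N" if "0 < \<epsilon>" for \<epsilon>
  proof -
    have "L - \<epsilon> < L" using that by simp
    then show ?thesis unfolding L_def using less_cSUP_iff[OF _ bdd] by auto
  qed
  have "\<exists>\<psi>. fin_supp \<psi> \<and> (\<forall>x. 0 \<le> \<psi> x \<and> \<psi> x \<le> 1) \<and> (\<forall>x\<in>F n. \<psi> x = 1)
      \<and> W \<psi> \<le> ennreal (v n + 1 / real (Suc n))" for n
  proof -
    have "V n < ennreal (v n + 1 / real (Suc n))" unfolding Vv using v0[of n] by (simp add: ennreal_lessI)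
    then obtain \<phi> where \<phi>: "\<phi> \<in> Adm n" "W \<phi> < ennreal (v n + 1 / real (Suc n))"
      unfolding V_def INF_less_iff by blast
    define \<psi> where "\<psi> = (\<lambda>x. min (max (\<phi> x) 0) 1)"
    have "fin_supp \<psi>" unfolding \<psi>_def using \<phi>(1) unfolding Adm_def by (auto intro: fin_supp_clip)
    moreover have "W \<psi> \<le> ennreal (v n + 1 / real (Suc n))"
      unfolding \<psi>_def using W_clip[of \<phi>] \<phi>(2) by simp
    moreover have "\<forall>x. 0 \<le> \<psi> x \<and> \<psi> x \<le> 1" "\<forall>x\<in>F n. \<psi> x = 1"
      using \<phi>(1) unfolding \<psi>_def Adm_def by auto
    ultimately show ?thesis by blast
  qed
  then obtain \<psi> where \<psi>fs: "\<And>n. fin_supp (\<psi> n)" and \<psi>01: "\<And>n x. 0 \<le> \<psi> n x \<and> \<psi> n x \<le> 1"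
    and \<psi>F: "\<And>n x. x \<in> F n \<Longrightarrow> \<psi> n x = 1" and \<psi>W: "\<And>n. W (\<psi> n) \<le> ennreal (v n + 1 / real (Suc n))"
    by metis
  define w where "w = (\<lambda>n. enn2real (W (\<psi> n)))"
  have Ww: "W (\<psi> n) = ennreal (w n)" for n unfolding w_def using W_fin[OF \<psi>fs[of n]] by (rule W_real)
  have w0: "0 \<le> w n" for n unfolding w_def by simp
  have wle: "w n \<le> v n + 1 / real (Suc n)" for n
  proof -
    have "0 \<le> v n + 1 / real (Suc n)" using v0[of n] by simp
    then show ?thesis using \<psi>W[of n] unfolding Ww by (subst (asm) ennreal_le_iff)
  qed
  have wL: "w m \<le> L + 1 / real (Suc n)" if "n \<le> m" for n m
  proof -
    have "1 / real (Suc m) \<le> 1 / real (Suc n)" using that by (simp add: frac_le)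
    then show ?thesis using wle[of m] vL[of m] by simp
  qed
  have cauchy: "\<exists>N. \<forall>n m. N \<le> n \<longrightarrow> n \<le> m \<longrightarrow> W (\<lambda>x. \<psi> n x - \<psi> m x) \<le> ennreal \<epsilon>"
    if eps: "0 < \<epsilon>" for \<epsilon>
  proof -
    define \<eta> where "\<eta> = \<epsilon> / (4 * (L + 1))"
    have eta: "0 < \<eta>" unfolding \<eta>_def using eps L0 by simp
    obtain C where C: "C > 0" and uc: "\<And>f g. W (\<lambda>x. f x - g x) + ennreal C * W (\<lambda>x. (f x + g x) / 2)
      \<le> ennreal (C / 2 + \<eta>) * (W f + W g)"
      using W_uc[OF eta] by blast
    define \<delta> where "\<delta> = \<epsilon> / (4 * C)"
    have \<delta>: "0 < \<delta>" unfolding \<delta>_def using eps C by simp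
    obtain N1 where N1: "L - \<delta> < v N1" using Lapprox[OF \<delta>] by blast
    obtain N2 where N2: "1 / real (Suc N2) < \<delta>"
      using \<delta> by (metis Suc_eq_plus1 nat_approx_posE)
    define N where "N = max N1 N2"
    have "W (\<lambda>x. \<psi> n x - \<psi> m x) \<le> ennreal \<epsilon>" if nm: "N \<le> n" "n \<le> m" for n m
    proof -
      define mid where "mid = (\<lambda>x. (\<psi> n x + \<psi> m x) / 2)"
      have mid_adm: "mid \<in> Adm n"
        unfolding Adm_def mid_def using \<psi>F Fmono[OF nm(2)] \<psi>fs
        by (auto simp: fin_supp_def intro: finite_subset[of _ "{x. \<psi> n x \<noteq> 0} \<union> {x. \<psi> m x \<noteq> 0}"])
      then have "V n \<le> W mid" unfolding V_def by (rule INF_lower)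
      have midfin: "W mid < \<infinity>"
        using mid_adm W_fin[of mid] unfolding Adm_def by simp
      define wm where "wm = enn2real (W mid)"
      have Wm: "W mid = ennreal wm" unfolding wm_def using midfin by (rule W_real)
      have wm0: "0 \<le> wm" unfolding wm_def by simp
      have vwm: "v n \<le> wm" using \<open>V n \<le> W mid\<close> unfolding Wm Vv using v0 wm0 by (auto simp: ennreal_le_iff2)
      have dfin: "W (\<lambda>x. \<psi> n x - \<psi> m x) < \<infinity>"
        by (rule W_fin) (use \<psi>fs in \<open>auto simp: fin_supp_def intro: finite_subset[of _ "{x. \<psi> n x \<noteq> 0} \<union> {x. \<psi> m x \<noteq> 0}"]\<close>)
      define d where "d = enn2real (W (\<lambda>x. \<psi> n x - \<psi> m x))"
      have Wd: "W (\<lambda>x. \<psi> n x - \<psi> m x) = ennreal d" unfolding d_def using dfin by (rule W_real)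
      have d0: "0 \<le> d" unfolding d_def by simp
      have "ennreal (d + C * wm) \<le> ennreal ((C / 2 + \<eta>) * (w n + w m))"
        using uc[of "\<psi> n" "\<psi> m"] C eta d0 wm0 w0
        unfolding Wd mid_def[symmetric] Wm Ww
        by (simp add: ennreal_mult'[symmetric] ennreal_plus[symmetric] del: ennreal_plus)
      then have "d + C * wm \<le> (C / 2 + \<eta>) * (w n + w m)"
        using C eta w0 by (subst (asm) ennreal_le_iff) (auto intro: add_nonneg_nonneg)
      then have "d \<le> (C / 2 + \<eta>) * (w n + w m) - C * v n"
        using vwm C by (smt (verit) mult_left_mono)
      also have "\<dots> \<le> (C / 2 + \<eta>) * (2 * (L + 1 / real (Suc n))) - C * v n"
        using wL[of n n] wL[OF nm(2)] C eta by (intro diff_right_mono mult_left_mono) auto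
      also have "\<dots> = C * (L - v n + 1 / real (Suc n)) + 2 * \<eta> * (L + 1 / real (Suc n))"
        by (simp add: algebra_simps add_divide_distrib)
      also have "\<dots> \<le> C * (2 * \<delta>) + 2 * \<eta> * (L + 1)"
      proof (rule add_mono)
        have "v N1 \<le> v n" using nm unfolding N_def by (intro vmono) auto
        moreover have "1 / real (Suc n) \<le> 1 / real (Suc N2)"
          using nm unfolding N_def by (simp add: frac_le)
        ultimately have "L - v n + 1 / real (Suc n) \<le> 2 * \<delta>" using N1 N2 by simp
        then show "C * (L - v n + 1 / real (Suc n)) \<le> C * (2 * \<delta>)" using C by simp
        have "1 / real (Suc n) \<le> 1" by simp
        then show "2 * \<eta> * (L + 1 / real (Suc n)) \<le> 2 * \<eta> * (L + 1)" using eta by simp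
      qed
      also have "\<dots> = \<epsilon>"
        unfolding \<delta>_def \<eta>_def using C L0 by (simp add: field_simps)
      finally show ?thesis unfolding Wd by (simp add: ennreal_leI)
    qed
    then show ?thesis by blast
  qed
  have \<psi>lim: "(\<lambda>m. \<psi> m x) \<longlonglongrightarrow> 1" for x
  proof (rule tendsto_eventually)
    show "eventually (\<lambda>m. \<psi> m x = 1) sequentially" using Fev[of x] by eventually_elim (rule \<psi>F)
  qed
  have small: "\<exists>N. \<forall>n\<ge>N. W (\<psi> n) \<le> ennreal \<epsilon>" if eps: "0 < \<epsilon>" for \<epsilon>
  proof -
    obtain N where N: "\<And>n m. N \<le> n \<Longrightarrow> n \<le> m \<Longrightarrow> W (\<lambda>x. \<psi> n x - \<psi> m x) \<le> ennreal \<epsilon>"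
      using cauchy[OF eps] by blast
    have "W (\<psi> n) \<le> ennreal \<epsilon>" if n: "N \<le> n" for n
    proof -
      have "W (\<lambda>x. \<psi> n x - 1) \<le> ennreal \<epsilon>"
      proof (rule W_lsc[of "\<lambda>m x. \<psi> n x - \<psi> m x"])
        show "(\<lambda>m. \<psi> n x - \<psi> m x) \<longlonglongrightarrow> \<psi> n x - 1" for x
          by (intro tendsto_diff tendsto_const \<psi>lim)
        show "eventually (\<lambda>m. W (\<lambda>x. \<psi> n x - \<psi> m x) \<le> ennreal \<epsilon>) sequentially"
          unfolding eventually_sequentially using N n by blast
      qed
      then show ?thesis by (simp add: W_minus_const)
    qed
    then show ?thesis by blast
  qed
  have W0: "(\<lambda>n. W (\<psi> n)) \<longlonglongrightarrow> 0"
  proof -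
    have "(\<lambda>n. w n) \<longlonglongrightarrow> 0"
    proof (rule LIMSEQ_I)
      fix r :: real assume r: "0 < r"
      obtain N where N: "\<And>n. n \<ge> N \<Longrightarrow> W (\<psi> n) \<le> ennreal (r / 2)" using small[of "r/2"] r by auto
      have "norm (w n - 0) < r" if "n \<ge> N" for n
        using N[OF that] w0[of n] r unfolding Ww by (simp add: ennreal_le_iff2)
      then show "\<exists>no. \<forall>n\<ge>no. norm (w n - 0) < r" by blast
    qed
    then have "(\<lambda>n. ennreal (w n)) \<longlonglongrightarrow> ennreal 0" by (rule tendsto_ennrealI)
    then show ?thesis unfolding Ww by simp
  qed
  show ?thesis by (rule core_parabolic[OF \<psi>fs W0 \<psi>lim])
qed

end

lemma clamp_lip:
  fixes a c N :: real
  shows "\<bar>(a - max (min a N) (-N)) - (c - max (min c N) (-N))\<bar> \<le> \<bar>a - c\<bar>"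
  by (auto simp: max_def min_def)

lemma clamp_lip2:
  fixes a c N :: real
  shows "\<bar>max (min a N) (-N) - max (min c N) (-N)\<bar> \<le> \<bar>a - c\<bar>"
  by (auto simp: max_def min_def)

context wg
begin

lemma seq_W0:
  assumes "\<And>n. W (e n) < ennreal (1 / real (Suc n))"
  shows "(\<lambda>n. W (e n)) \<longlonglongrightarrow> 0"
proof (rule tendsto_sandwich[of "\<lambda>_. 0" _ _ "\<lambda>n. ennreal (1 / real (Suc n))"])
  show "\<forall>\<^sub>F n in sequentially. W (e n) \<le> ennreal (1 / real (Suc n))"
    using assms by (intro always_eventually allI less_imp_le)
  have "(\<lambda>n. 1 / real (Suc n)) \<longlonglongrightarrow> 0" by (rule LIMSEQ_inverse_real_of_nat[unfolded inverse_eq_divide])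
  then show "(\<lambda>n. ennreal (1 / real (Suc n))) \<longlonglongrightarrow> 0"
    using tendsto_ennrealI[of "\<lambda>n. 1 / real (Suc n)" 0] by simp
qed auto

lemma trunc_conv:
  assumes fin: "W f < \<infinity>"
  shows "(\<lambda>N::nat. W (\<lambda>x. f x - max (min (f x) (real N)) (- real N))) \<longlonglongrightarrow> 0"
proof -
  define h where "h = (\<lambda>(N::nat) (z::'x \<times> 'x). ennreal (b (fst z) (snd z) *
     \<bar>(f (fst z) - max (min (f (fst z)) (real N)) (- real N)) - (f (snd z) - max (min (f (snd z)) (real N)) (- real N))\<bar> powr p))"
  define g where "g = (\<lambda>z::'x \<times> 'x. ennreal (b (fst z) (snd z) * \<bar>f (fst z) - f (snd z)\<bar> powr p))"
  have "(\<lambda>N. infsum (h N) UNIV) \<longlonglongrightarrow> 0"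
  proof (rule infsum_dominated_0)
    show "h N z \<le> g z" for N z
      unfolding h_def g_def using p1 bnn
      by (intro ennreal_leI mult_left_mono powr_mono2 clamp_lip) auto
    show "infsum g UNIV < \<infinity>" using fin unfolding W_def g_def by (simp add: case_prod_unfold)
    show "(\<lambda>N. h N z) \<longlonglongrightarrow> 0" for z
    proof (rule tendsto_eventually)
      obtain N0 :: nat where N0: "max \<bar>f (fst z)\<bar> \<bar>f (snd z)\<bar> \<le> real N0" using real_arch_simple by blast
      show "eventually (\<lambda>N. h N z = 0) sequentially"
        unfolding eventually_sequentially
      proof (intro exI allI impI)
        fix N assume "N0 \<le> N"
        then have "real N0 \<le> real N" by simp
        then have "\<bar>f (fst z)\<bar> \<le> real N" "\<bar>f (snd z)\<bar> \<le> real N" using N0 by auto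
        then have "max (min (f (fst z)) (real N)) (- real N) = f (fst z)"
          "max (min (f (snd z)) (real N)) (- real N) = f (snd z)" by (auto simp: abs_le_iff)
        then show "h N z = 0" unfolding h_def using p1 by simp
      qed
    qed
  qed
  moreover have "infsum (h N) UNIV = W (\<lambda>x. f x - max (min (f x) (real N)) (- real N))" for N
    unfolding h_def W_def by (simp add: case_prod_unfold)
  ultimately show ?thesis by simp
qed

lemma prod_conv:
  assumes fin: "W f < \<infinity>" and fK: "\<And>x. \<bar>f x\<bar> \<le> K"
    and u01: "\<And>n x. 0 \<le> u n x \<and> u n x \<le> 1" and u0: "\<And>x. (\<lambda>n. u n x) \<longlonglongrightarrow> 0"
    and Wu: "(\<lambda>n. W (u n)) \<longlonglongrightarrow> 0"
  shows "(\<lambda>n. W (\<lambda>x. f x * u n x)) \<longlonglongrightarrow> 0"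
proof -
  have K0: "0 \<le> K" using fK[of undefined] by simp
  define S where "S = (\<lambda>n. infsum (\<lambda>z::'x\<times>'x. ennreal (b (fst z) (snd z) * (\<bar>u n (snd z)\<bar> powr p * \<bar>f (fst z) - f (snd z)\<bar> powr p))) UNIV)"
  have S0: "S \<longlonglongrightarrow> 0" unfolding S_def
  proof (rule infsum_dominated_0)
    show "ennreal (b (fst z) (snd z) * (\<bar>u n (snd z)\<bar> powr p * \<bar>f (fst z) - f (snd z)\<bar> powr p))
        \<le> ennreal (b (fst z) (snd z) * \<bar>f (fst z) - f (snd z)\<bar> powr p)" for n z
    proof -
      have "\<bar>u n (snd z)\<bar> powr p \<le> 1 powr p" using u01[of n "snd z"] p1 by (intro powr_mono2) auto
      then have "\<bar>u n (snd z)\<bar> powr p * \<bar>f (fst z) - f (snd z)\<bar> powr p \<le> \<bar>f (fst z) - f (snd z)\<bar> powr p"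
        using mult_right_mono[of _ 1 "\<bar>f (fst z) - f (snd z)\<bar> powr p"] by simp
      then show ?thesis using bnn by (intro ennreal_leI mult_left_mono) auto
    qed
    show "infsum (\<lambda>z. ennreal (b (fst z) (snd z) * \<bar>f (fst z) - f (snd z)\<bar> powr p)) UNIV < \<infinity>"
      using fin unfolding W_def by (simp add: case_prod_unfold)
    show "(\<lambda>n. ennreal (b (fst z) (snd z) * (\<bar>u n (snd z)\<bar> powr p * \<bar>f (fst z) - f (snd z)\<bar> powr p))) \<longlonglongrightarrow> 0" for z
    proof -
      have "(\<lambda>n. b (fst z) (snd z) * (\<bar>u n (snd z)\<bar> powr p * \<bar>f (fst z) - f (snd z)\<bar> powr p))
          \<longlonglongrightarrow> b (fst z) (snd z) * (\<bar>0\<bar> powr p * \<bar>f (fst z) - f (snd z)\<bar> powr p)"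
        using p1 by (intro tendsto_mult tendsto_const tendsto_abs_powr u0) auto
      then have "(\<lambda>n. ennreal (b (fst z) (snd z) * (\<bar>u n (snd z)\<bar> powr p * \<bar>f (fst z) - f (snd z)\<bar> powr p))) \<longlonglongrightarrow> ennreal 0"
        using p1 by (intro tendsto_ennrealI) simp
      then show ?thesis by simp
    qed
  qed
  have bound: "W (\<lambda>x. f x * u n x) \<le> ennreal (2 powr p * K powr p) * W (u n) + ennreal (2 powr p) * S n" for n
  proof -
    define A where "A = (\<lambda>z::'x\<times>'x. ennreal (b (fst z) (snd z) * \<bar>u n (fst z) - u n (snd z)\<bar> powr p))"
    define Bf where "Bf = (\<lambda>z::'x\<times>'x. ennreal (b (fst z) (snd z) * (\<bar>u n (snd z)\<bar> powr p * \<bar>f (fst z) - f (snd z)\<bar> powr p)))"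
    have "W (\<lambda>x. f x * u n x) \<le> infsum (\<lambda>z. ennreal (2 powr p * K powr p) * A z + ennreal (2 powr p) * Bf z) UNIV"
      unfolding W_def
    proof (rule infsum_mono)
      fix z :: "'x \<times> 'x"
      obtain x y where z: "z = (x, y)" by fastforce
      have "\<bar>f x * u n x - f y * u n y\<bar> \<le> \<bar>f x\<bar> * \<bar>u n x - u n y\<bar> + \<bar>u n y\<bar> * \<bar>f x - f y\<bar>"
      proof -
        have "f x * u n x - f y * u n y = f x * (u n x - u n y) + u n y * (f x - f y)" by (simp add: algebra_simps)
        then show ?thesis by (metis abs_mult abs_triangle_ineq)
      qed
      then have "\<bar>f x * u n x - f y * u n y\<bar> powr p \<le> (\<bar>f x\<bar> * \<bar>u n x - u n y\<bar> + \<bar>u n y\<bar> * \<bar>f x - f y\<bar>) powr p"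
        using p1 by (intro powr_mono2) auto
      also have "\<dots> \<le> 2 powr p * (\<bar>\<bar>f x\<bar> * \<bar>u n x - u n y\<bar>\<bar> powr p + \<bar>\<bar>u n y\<bar> * \<bar>f x - f y\<bar>\<bar> powr p)"
        using pw_sum[of "\<bar>f x\<bar> * \<bar>u n x - u n y\<bar>" "\<bar>u n y\<bar> * \<bar>f x - f y\<bar>"] by simp
      also have "\<dots> = 2 powr p * (\<bar>f x\<bar> powr p * \<bar>u n x - u n y\<bar> powr p + \<bar>u n y\<bar> powr p * \<bar>f x - f y\<bar> powr p)"
        by (simp add: abs_mult powr_mult)
      also have "\<dots> \<le> 2 powr p * (K powr p * \<bar>u n x - u n y\<bar> powr p + \<bar>u n y\<bar> powr p * \<bar>f x - f y\<bar> powr p)"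
        using fK[of x] p1 by (intro mult_left_mono add_right_mono mult_right_mono powr_mono2) auto
      finally have "b x y * \<bar>f x * u n x - f y * u n y\<bar> powr p \<le>
          b x y * (2 powr p * (K powr p * \<bar>u n x - u n y\<bar> powr p + \<bar>u n y\<bar> powr p * \<bar>f x - f y\<bar> powr p))"
        using bnn by (intro mult_left_mono) auto
      also have "\<dots> = (2 powr p * K powr p) * (b x y * \<bar>u n x - u n y\<bar> powr p)
          + 2 powr p * (b x y * (\<bar>u n y\<bar> powr p * \<bar>f x - f y\<bar> powr p))"
        by (simp add: algebra_simps)
      finally have "ennreal (b x y * \<bar>f x * u n x - f y * u n y\<bar> powr p) \<le> ennreal ((2 powr p * K powr p) * (b x y * \<bar>u n x - u n y\<bar> powr p)
          + 2 powr p * (b x y * (\<bar>u n y\<bar> powr p * \<bar>f x - f y\<bar> powr p)))"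
        by (rule ennreal_leI)
      also have "\<dots> = ennreal (2 powr p * K powr p) * A z + ennreal (2 powr p) * Bf z"
        unfolding A_def Bf_def z using bnn
        by (simp add: ennreal_mult'[symmetric] ennreal_plus[symmetric] del: ennreal_plus)
      finally show "(case z of (x, y) \<Rightarrow> ennreal (b x y * \<bar>f x * u n x - f y * u n y\<bar> powr p))
          \<le> ennreal (2 powr p * K powr p) * A z + ennreal (2 powr p) * Bf z" unfolding z by simp
    qed auto
    also have "\<dots> = ennreal (2 powr p * K powr p) * infsum A UNIV + ennreal (2 powr p) * infsum Bf UNIV"
      by (subst infsum_add) (auto simp: ennreal_infsum_cmult)
    also have "infsum A UNIV = W (u n)" unfolding A_def W_def by (simp add: case_prod_unfold)
    also have "infsum Bf UNIV = S n" unfolding Bf_def S_def ..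
    finally show ?thesis .
  qed
  have "(\<lambda>n. ennreal (2 powr p * K powr p) * W (u n) + ennreal (2 powr p) * S n)
      \<longlonglongrightarrow> ennreal (2 powr p * K powr p) * 0 + ennreal (2 powr p) * 0"
    by (intro tendsto_add ennreal_tendsto_cmult[OF _ Wu] ennreal_tendsto_cmult[OF _ S0]) auto
  then have lim: "(\<lambda>n. ennreal (2 powr p * K powr p) * W (u n) + ennreal (2 powr p) * S n) \<longlonglongrightarrow> 0"
    by simp
  show ?thesis
  proof (rule tendsto_sandwich[of "\<lambda>_. 0" _ _ "\<lambda>n. ennreal (2 powr p * K powr p) * W (u n) + ennreal (2 powr p) * S n"])
    show "\<forall>\<^sub>F n in sequentially. W (\<lambda>x. f x * u n x) \<le> ennreal (2 powr p * K powr p) * W (u n) + ennreal (2 powr p) * S n"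
      using bound by (intro always_eventually allI)
  qed (use lim in simp_all)
qed


lemma para_approx:
  assumes P: "p_parabolic b (\<lambda>_. 0) p" and fin: "W f < \<infinity>" and eps: "0 < \<epsilon>"
  shows "\<exists>\<phi>. fin_supp \<phi> \<and> W (\<lambda>x. \<phi> x - f x) \<le> ennreal \<epsilon> \<and> \<bar>\<phi> x0 - f x0\<bar> \<le> \<epsilon>"
proof -
  obtain e where fs: "\<forall>n. fin_supp (e n)" and e01: "\<forall>n x. 0 \<le> e n x \<and> e n x \<le> 1"
    and ev1: "\<forall>x. eventually (\<lambda>n. e n x = 1) sequentially"
    and Wlt: "\<forall>n. W (e n) < ennreal (1 / real (Suc n))"
    using para_seq[OF P] by blast
  define u where "u = (\<lambda>n x. 1 - e n x)"
  have u01: "0 \<le> u n x \<and> u n x \<le> 1" for n x unfolding u_def using e01 by auto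
  have elim: "(\<lambda>n. e n x) \<longlonglongrightarrow> 1" for x
    by (rule tendsto_eventually) (use ev1 in blast)
  have u0: "(\<lambda>n. u n x) \<longlonglongrightarrow> 0" for x
    unfolding u_def using tendsto_diff[OF tendsto_const elim, of 1 x] by simp
  have Wu: "(\<lambda>n. W (u n)) \<longlonglongrightarrow> 0"
    unfolding u_def W_const_minus using seq_W0 Wlt by blast
  define \<epsilon>' where "\<epsilon>' = \<epsilon> / (2 * 2 powr p)"
  have \<epsilon>': "0 < \<epsilon>'" unfolding \<epsilon>'_def using eps by simp
  have ev_tr: "eventually (\<lambda>N::nat. W (\<lambda>x. f x - max (min (f x) (real N)) (- real N)) < ennreal \<epsilon>') sequentially"
    using trunc_conv[OF fin] \<epsilon>' by (intro order_tendstoD(2)) auto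
  have ev_x0: "eventually (\<lambda>N::nat. \<bar>f x0\<bar> \<le> real N) sequentially"
  proof -
    obtain N0 :: nat where "\<bar>f x0\<bar> \<le> real N0" using real_arch_simple by blast
    then show ?thesis unfolding eventually_sequentially
      by (intro exI[of _ N0]) (auto intro: order_trans)
  qed
  from eventually_conj[OF ev_tr ev_x0] obtain N :: nat where
    N: "W (\<lambda>x. f x - max (min (f x) (real N)) (- real N)) < ennreal \<epsilon>'" "\<bar>f x0\<bar> \<le> real N"
    unfolding eventually_sequentially by blast
  define fN where "fN = (\<lambda>x. max (min (f x) (real N)) (- real N))"
  have fNK: "\<bar>fN x\<bar> \<le> real N" for x unfolding fN_def by auto
  have fNx0: "fN x0 = f x0" unfolding fN_def using N(2) by (auto simp: abs_le_iff)
  have WfN: "W fN < \<infinity>"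
  proof -
    have "W fN \<le> W f" unfolding fN_def by (rule W_mono) (rule clamp_lip2)
    then show ?thesis using fin by (rule le_less_trans)
  qed
  have pc: "(\<lambda>n. W (\<lambda>x. fN x * u n x)) \<longlonglongrightarrow> 0"
    by (rule prod_conv[OF WfN fNK u01 u0 Wu])
  have ev1': "eventually (\<lambda>n. W (\<lambda>x. fN x * u n x) < ennreal \<epsilon>') sequentially"
    using pc \<epsilon>' by (intro order_tendstoD(2)) auto
  have "(\<lambda>n. fN x0 * e n x0) \<longlonglongrightarrow> fN x0 * 1" by (intro tendsto_mult tendsto_const elim)
  then have ev2': "eventually (\<lambda>n. dist (fN x0 * e n x0) (fN x0) < \<epsilon>) sequentially"
    using eps by (simp add: tendsto_iff)
  from eventually_conj[OF ev1' ev2'] obtain n where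
    n: "W (\<lambda>x. fN x * u n x) < ennreal \<epsilon>'" "dist (fN x0 * e n x0) (fN x0) < \<epsilon>"
    unfolding eventually_sequentially by blast
  define \<phi> where "\<phi> = (\<lambda>x. fN x * e n x)"
  have "fin_supp \<phi>" unfolding \<phi>_def using fs by (auto intro: fin_supp_mult)
  moreover have "\<bar>\<phi> x0 - f x0\<bar> \<le> \<epsilon>" using n(2) fNx0 unfolding \<phi>_def dist_real_def by simp
  moreover have "W (\<lambda>x. \<phi> x - f x) \<le> ennreal \<epsilon>"
  proof -
    have "W (\<lambda>x. (\<phi> x - fN x) + (fN x - f x)) \<le> ennreal (2 powr p) * W (\<lambda>x. \<phi> x - fN x)
        + ennreal (2 powr p) * W (\<lambda>x. fN x - f x)" by (rule W_add)
    moreover have "W (\<lambda>x. \<phi> x - fN x) = W (\<lambda>x. fN x * u n x)"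
      unfolding \<phi>_def u_def by (rule W_cong_grad) (simp add: algebra_simps abs_minus_commute)
    moreover have "W (\<lambda>x. fN x - f x) = W (\<lambda>x. f x - max (min (f x) (real N)) (- real N))"
      unfolding fN_def by (rule W_cong_grad) (simp add: algebra_simps abs_minus_commute)
    ultimately have "W (\<lambda>x. \<phi> x - f x) \<le> ennreal (2 powr p) * W (\<lambda>x. fN x * u n x)
        + ennreal (2 powr p) * W (\<lambda>x. f x - max (min (f x) (real N)) (- real N))" by simp
    also have "\<dots> \<le> ennreal (2 powr p) * ennreal \<epsilon>' + ennreal (2 powr p) * ennreal \<epsilon>'"
      using n(1) N(1) by (intro add_mono mult_left_mono less_imp_le) auto
    also have "\<dots> = ennreal \<epsilon>"
      unfolding \<epsilon>'_def using eps
      by (simp add: ennreal_mult'[symmetric] ennreal_plus[symmetric] del: ennreal_plus)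
    finally show ?thesis .
  qed
  ultimately show ?thesis by blast
qed

lemma para_D0:
  assumes P: "p_parabolic b (\<lambda>_. 0) p" and fin: "W f < \<infinity>"
  shows "f \<in> D0p b (\<lambda>_. 0) p x0"
proof -
  have "\<forall>k::nat. \<exists>\<phi>. fin_supp \<phi> \<and> W (\<lambda>x. \<phi> x - f x) \<le> ennreal (1 / real (Suc k))
      \<and> \<bar>\<phi> x0 - f x0\<bar> \<le> 1 / real (Suc k)"
    using para_approx[OF P fin] by simp
  then obtain \<phi> where \<phi>: "\<And>k. fin_supp (\<phi> k)" "\<And>k. W (\<lambda>x. \<phi> k x - f x) \<le> ennreal (1 / real (Suc k))"
    "\<And>k. \<bar>\<phi> k x0 - f x0\<bar> \<le> 1 / real (Suc k)"
    by metis
  have lim: "(\<lambda>k. 1 / real (Suc k)) \<longlonglongrightarrow> 0"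
    by (rule LIMSEQ_inverse_real_of_nat[unfolded inverse_eq_divide])
  have "(\<lambda>k. W (\<lambda>x. \<phi> k x - f x)) \<longlonglongrightarrow> 0"
  proof (rule tendsto_sandwich[of "\<lambda>_. 0" _ _ "\<lambda>k. ennreal (1 / real (Suc k))"])
    show "\<forall>\<^sub>F n in sequentially. W (\<lambda>x. \<phi> n x - f x) \<le> ennreal (1 / real (Suc n))"
      using \<phi>(2) by (intro always_eventually allI)
    show "(\<lambda>k. ennreal (1 / real (Suc k))) \<longlonglongrightarrow> 0"
      using tendsto_ennrealI[OF lim] by simp
  qed auto
  moreover have "(\<lambda>k. \<phi> k x0 - f x0) \<longlonglongrightarrow> 0"
  proof (rule tendsto_sandwich[of "\<lambda>k. - (1 / real (Suc k))" _ _ "\<lambda>k. 1 / real (Suc k)"])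
    show "\<forall>\<^sub>F n in sequentially. - (1 / real (Suc n)) \<le> \<phi> n x0 - f x0"
      using \<phi>(3) by (intro always_eventually allI) (metis abs_le_iff minus_le_iff)
    show "\<forall>\<^sub>F n in sequentially. \<phi> n x0 - f x0 \<le> 1 / real (Suc n)"
      using \<phi>(3) by (intro always_eventually allI) (metis abs_le_iff)
    show "(\<lambda>k. - (1 / real (Suc k))) \<longlonglongrightarrow> 0" using tendsto_minus[OF lim] by simp
  qed (use lim in simp)
  ultimately have "(\<lambda>k. normo b (\<lambda>_. 0) p x0 (\<lambda>x. \<phi> k x - f x)) \<longlonglongrightarrow> 0"
    by (rule normo_tendsto)
  moreover have "f \<in> Dp b (\<lambda>_. 0) p" using fin by (simp add: Dp_iff)
  ultimately show ?thesis unfolding D0p_def using \<phi>(1) by blast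
qed

end

context wg
begin

lemma W0_pointwise:
  assumes W0: "(\<lambda>n. W (h n)) \<longlonglongrightarrow> 0" and at_y: "(\<lambda>n. h n y) \<longlonglongrightarrow> a"
  shows "(\<lambda>n. h n x) \<longlonglongrightarrow> a"
proof -
  obtain C where C: "C > 0" "\<And>f. ennreal (\<bar>f x - f y\<bar> powr p) \<le> ennreal C * W f"
    using path_bound[of x y] by blast
  have "(\<lambda>n. ennreal C * W (h n)) \<longlonglongrightarrow> ennreal C * 0"
    by (rule ennreal_tendsto_cmult[OF _ W0]) simp
  then have lim: "(\<lambda>n. ennreal C * W (h n)) \<longlonglongrightarrow> 0" by simp
  have "(\<lambda>n. ennreal (\<bar>h n x - h n y\<bar> powr p)) \<longlonglongrightarrow> 0"
  proof (rule tendsto_sandwich[of "\<lambda>_. 0" _ _ "\<lambda>n. ennreal C * W (h n)"])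
    show "\<forall>\<^sub>F n in sequentially. ennreal (\<bar>h n x - h n y\<bar> powr p) \<le> ennreal C * W (h n)"
      using C(2)[of "h _"] by simp
  qed (use lim in simp_all)
  then have "(\<lambda>n. \<bar>h n x - h n y\<bar> powr p) \<longlonglongrightarrow> 0"
    by (subst (asm) ennreal_tendsto_0_iff) auto
  from tendsto_zero_powrI[OF this tendsto_const, of "1/p"]
  have "(\<lambda>n. (\<bar>h n x - h n y\<bar> powr p) powr (1/p)) \<longlonglongrightarrow> 0"
    using p1 by auto
  then have "(\<lambda>n. \<bar>h n x - h n y\<bar>) \<longlonglongrightarrow> 0"
    using p1 by (simp add: powr_powr)
  then have "(\<lambda>n. h n x - h n y) \<longlonglongrightarrow> 0"
    by (simp add: tendsto_rabs_zero_iff)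
  from tendsto_add[OF this at_y] show ?thesis by simp
qed

lemma W_one: "W (\<lambda>_. 1) = 0" by (rule W_const)

lemma D0_one_parabolic:
  assumes "(\<lambda>_. 1) \<in> D0p b (\<lambda>_. 0) p x0"
  shows "p_parabolic b (\<lambda>_. 0) p"
proof -
  obtain \<phi> where fs: "\<And>n. fin_supp (\<phi> n)"
    and lim: "(\<lambda>n. normo b (\<lambda>_. 0) p x0 (\<lambda>x. \<phi> n x - 1)) \<longlonglongrightarrow> 0"
    using assms unfolding D0p_def by blast
  have fin: "W (\<lambda>x. \<phi> n x - 1) < \<infinity>" for n
    using W_fin[OF fs[of n]] by (simp add: W_minus_const)
  have "(\<lambda>n. W (\<lambda>x. \<phi> n x - 1)) \<longlonglongrightarrow> 0" "(\<lambda>n. \<phi> n x0 - 1) \<longlonglongrightarrow> 0"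
    using normo_tendstoD[OF lim fin] by auto
  then have "(\<lambda>n. W (\<phi> n)) \<longlonglongrightarrow> 0" "(\<lambda>n. \<phi> n x0) \<longlonglongrightarrow> 1"
    using tendsto_add[of "\<lambda>n. \<phi> n x0 - 1" 0 sequentially "\<lambda>_. 1" 1] by (auto simp: W_minus_const)
  then show ?thesis by (intro core_parabolic[OF fs]) auto
qed

lemma para_one_D0:
  assumes "p_parabolic b (\<lambda>_. 0) p"
  shows "(\<lambda>_. 1) \<in> D0p b (\<lambda>_. 0) p x0"
  using para_D0[OF assms] W_one by simp

lemma vii_parabolic:
  assumes u: "u \<in> D0p b (\<lambda>_. 0) p x0" and K: "finite K"
    and inf: "(INF x\<in>UNIV - K. ereal (u x)) > 0"
  shows "p_parabolic b (\<lambda>_. 0) p"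
proof -
  obtain \<delta> where \<delta>: "0 < ereal \<delta>" "ereal \<delta> < (INF x\<in>UNIV - K. ereal (u x))"
    using ereal_dense2[OF inf] by blast
  have \<delta>0: "0 < \<delta>" using \<delta>(1) by simp
  have u\<delta>: "\<delta> \<le> u x" if "x \<notin> K" for x
  proof -
    have "(INF x\<in>UNIV - K. ereal (u x)) \<le> ereal (u x)" using that by (intro INF_lower) auto
    then have "ereal \<delta> < ereal (u x)" using \<delta>(2) by (rule order_less_le_trans[rotated])
    then show ?thesis by simp
  qed
  obtain \<phi> where fs: "\<And>n. fin_supp (\<phi> n)"
    and lim: "(\<lambda>n. normo b (\<lambda>_. 0) p x0 (\<lambda>x. \<phi> n x - u x)) \<longlonglongrightarrow> 0"
    and uD: "u \<in> Dp b (\<lambda>_. 0) p"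
    using u unfolding D0p_def by blast
  have Wu: "W u < \<infinity>" using uD by (simp add: Dp_iff)
  have fin: "W (\<lambda>x. \<phi> n x - u x) < \<infinity>" for n
  proof -
    have "W (\<lambda>x. \<phi> n x - u x) \<le> ennreal (2 powr p) * W (\<phi> n) + ennreal (2 powr p) * W u"
      by (rule W_diff)
    also have "\<dots> < \<infinity>" using W_fin[OF fs[of n]] Wu
      by (simp add: ennreal_mult_eq_top_iff less_top[symmetric])
    finally show ?thesis .
  qed
  have W0: "(\<lambda>n. W (\<lambda>x. \<phi> n x - u x)) \<longlonglongrightarrow> 0" and x0lim: "(\<lambda>n. \<phi> n x0 - u x0) \<longlonglongrightarrow> 0"
    using normo_tendstoD[OF lim fin] by auto
  have ptw: "(\<lambda>n. \<phi> n x) \<longlonglongrightarrow> u x" for x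
  proof -
    have "(\<lambda>n. \<phi> n x - u x) \<longlonglongrightarrow> 0" by (rule W0_pointwise[OF W0 x0lim])
    from tendsto_add[OF this tendsto_const[of "u x"]] show ?thesis by simp
  qed
  obtain N where N: "\<And>n. n \<ge> N \<Longrightarrow> W (\<lambda>x. \<phi> n x - u x) \<le> 1"
    using order_tendstoD(2)[OF W0, of 1] unfolding eventually_sequentially by (auto intro: less_imp_le)
  define gs where "gs = (\<lambda>n x. max (min (max (\<phi> (n + N) x / \<delta>) 0) 1) (of_bool (x \<in> K)))"
  have gfs: "fin_supp (gs n)" for n
    unfolding gs_def using fs[of "n + N"] K
    by (intro fin_supp_max fin_supp_clip fin_supp_ind)
       (auto simp: divide_inverse mult.commute intro: fin_supp_scale)
  have glim: "(\<lambda>n. gs n x) \<longlonglongrightarrow> 1" for x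
  proof (cases "x \<in> K")
    case True then show ?thesis unfolding gs_def by (simp add: max_def)
  next
    case False
    have "(\<lambda>n. \<phi> (n + N) x) \<longlonglongrightarrow> u x" using ptw[of x] by (rule LIMSEQ_ignore_initial_segment)
    then have "(\<lambda>n. max (min (max (\<phi> (n + N) x / \<delta>) 0) 1) (of_bool (x \<in> K)))
        \<longlonglongrightarrow> max (min (max (u x / \<delta>) 0) 1) (of_bool (x \<in> K))"
      by (intro tendsto_max tendsto_min tendsto_divide tendsto_const) (use \<delta>0 in auto)
    moreover have "max (min (max (u x / \<delta>) 0) 1) (of_bool (x \<in> K)) = (1::real)"
      using u\<delta>[OF False] \<delta>0 False by (simp add: le_divide_eq)
    ultimately show ?thesis unfolding gs_def by simp
  qed
  define M where "M = (1 / \<delta>) powr p * (2 powr p * (1 + enn2real (W u))) + enn2real (W (\<lambda>x. of_bool (x \<in> K)))"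
  have M0: "0 \<le> M" unfolding M_def by simp
  have gbd: "W (gs n) \<le> ennreal M" for n
  proof -
    have Wind: "W (\<lambda>x. of_bool (x \<in> K)) = ennreal (enn2real (W (\<lambda>x. of_bool (x \<in> K))))"
      using W_fin[OF fin_supp_ind[OF K]] by (rule W_real)
    have WuR: "W u = ennreal (enn2real (W u))" using Wu by (rule W_real)
    have s1: "W (gs n) \<le> W (\<lambda>x. min (max (\<phi> (n + N) x / \<delta>) 0) 1) + W (\<lambda>x. of_bool (x \<in> K))"
      unfolding gs_def by (rule W_max)
    have s2: "W (\<lambda>x. min (max (\<phi> (n + N) x / \<delta>) 0) 1) \<le> W (\<lambda>x. (1 / \<delta>) * \<phi> (n + N) x)"
      by (rule W_mono) (auto simp: max_def min_def abs_le_iff)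
    have s3: "W (\<lambda>x. (1 / \<delta>) * \<phi> (n + N) x) = ennreal ((1 / \<delta>) powr p) * W (\<phi> (n + N))"
      using W_scale[of "1 / \<delta>" "\<phi> (n + N)"] \<delta>0 by simp
    have s4: "W (\<phi> (n + N)) \<le> ennreal (2 powr p * (1 + enn2real (W u)))"
    proof -
      have "W (\<phi> (n + N)) = W (\<lambda>x. (\<phi> (n + N) x - u x) + u x)" by simp
      also have "\<dots> \<le> ennreal (2 powr p) * W (\<lambda>x. \<phi> (n + N) x - u x) + ennreal (2 powr p) * W u"
        by (rule W_add)
      also have "\<dots> \<le> ennreal (2 powr p) * 1 + ennreal (2 powr p) * ennreal (enn2real (W u))"
        using N[of "n + N"] WuR by (intro add_mono mult_left_mono) auto
      also have "\<dots> = ennreal (2 powr p * (1 + enn2real (W u)))"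
        by (simp add: ennreal_mult'[symmetric] ennreal_plus[symmetric] distrib_left del: ennreal_plus)
      finally show ?thesis .
    qed
    have s5: "W (\<lambda>x. min (max (\<phi> (n + N) x / \<delta>) 0) 1)
        \<le> ennreal ((1 / \<delta>) powr p) * ennreal (2 powr p * (1 + enn2real (W u)))"
    proof -
      have "ennreal ((1 / \<delta>) powr p) * W (\<phi> (n + N))
          \<le> ennreal ((1 / \<delta>) powr p) * ennreal (2 powr p * (1 + enn2real (W u)))"
        by (rule mult_left_mono[OF s4 zero_le])
      then show ?thesis using s2 unfolding s3 by (rule order_trans[rotated])
    qed
    have "W (gs n) \<le> ennreal ((1 / \<delta>) powr p) * ennreal (2 powr p * (1 + enn2real (W u)))
        + ennreal (enn2real (W (\<lambda>x. of_bool (x \<in> K))))"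
    proof -
      have "W (\<lambda>x. min (max (\<phi> (n + N) x / \<delta>) 0) 1) + W (\<lambda>x. of_bool (x \<in> K))
          \<le> ennreal ((1 / \<delta>) powr p) * ennreal (2 powr p * (1 + enn2real (W u)))
            + W (\<lambda>x. of_bool (x \<in> K))"
        by (rule add_right_mono[OF s5])
      with s1 have "W (gs n) \<le> ennreal ((1 / \<delta>) powr p) * ennreal (2 powr p * (1 + enn2real (W u)))
            + W (\<lambda>x. of_bool (x \<in> K))" by (rule order_trans)
      then show ?thesis by (subst (asm) Wind)
    qed
    also have "\<dots> = ennreal M" unfolding M_def
      by (simp add: ennreal_mult'[symmetric] ennreal_plus[symmetric] del: ennreal_plus)
    finally show ?thesis .
  qed
  show ?thesis by (rule bounded_seq_parabolic[OF gfs glim gbd M0])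
qed


lemma para_not_equiv:
  assumes P: "p_parabolic b (\<lambda>_. 0) p"
  shows "\<not> equiv_functionals b (\<lambda>_. 0) p y0"
proof
  assume "equiv_functionals b (\<lambda>_. 0) p y0"
  then obtain C2 where C2: "C2 > 0" and le: "\<And>\<phi>. fin_supp \<phi> \<Longrightarrow>
      normo b (\<lambda>_. 0) p y0 \<phi> \<le> C2 * enn2real (E \<phi>) powr (1 / p)"
    unfolding equiv_functionals_def by blast
  define \<epsilon> where "\<epsilon> = (1 / (2 * C2)) powr p"
  have eps: "0 < \<epsilon>" unfolding \<epsilon>_def using C2 by simp
  have I0: "(INF \<phi>\<in>{\<phi>. fin_supp \<phi> \<and> (\<forall>x\<in>{y0}. 1 \<le> \<phi> x)}. E \<phi>) = 0"
    using P unfolding p_parabolic_def by blast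
  then have "(INF \<phi>\<in>{\<phi>. fin_supp \<phi> \<and> (\<forall>x\<in>{y0}. 1 \<le> \<phi> x)}. E \<phi>) < ennreal \<epsilon>" using eps by simp
  then obtain \<phi> where \<phi>: "fin_supp \<phi>" "1 \<le> \<phi> y0" "E \<phi> < ennreal \<epsilon>"
    unfolding INF_less_iff by auto
  define t where "t = enn2real (E \<phi>)"
  have t0: "0 \<le> t" unfolding t_def by simp
  have "E \<phi> = ennreal t" unfolding t_def using E_fin[OF \<phi>(1)] by (simp add: less_top[symmetric])
  then have te: "t < \<epsilon>" using \<phi>(3) t0 eps by (simp add: ennreal_less_iff)
  have "1 \<le> \<bar>\<phi> y0\<bar>" using \<phi>(2) by simp
  also have "\<bar>\<phi> y0\<bar> = (\<bar>\<phi> y0\<bar> powr p) powr (1 / p)" using p1 by (simp add: powr_powr)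
  also have "\<dots> \<le> normo b (\<lambda>_. 0) p y0 \<phi>"
    unfolding normo_def t_def[symmetric] using p1 t0 by (intro powr_mono2) auto
  also have "\<dots> \<le> C2 * t powr (1 / p)" using le[OF \<phi>(1)] unfolding t_def .
  also have "\<dots> \<le> C2 * \<epsilon> powr (1 / p)" using te t0 p1 C2 by (intro mult_left_mono powr_mono2) auto
  also have "\<epsilon> powr (1 / p) = 1 / (2 * C2)" unfolding \<epsilon>_def using p1 C2 by (simp add: powr_powr)
  finally show False using C2 by simp
qed

lemma nonpara_equiv:
  assumes nP: "\<not> p_parabolic b (\<lambda>_. 0) p"
  shows "equiv_functionals b (\<lambda>_. 0) p y0"
proof -
  have "\<exists>C>0. \<forall>\<phi>. fin_supp \<phi> \<longrightarrow> \<bar>\<phi> y0\<bar> powr p \<le> C * enn2real (E \<phi>)"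
  proof (rule ccontr)
    assume "\<not> ?thesis"
    then have "\<forall>n::nat. \<exists>\<phi>. fin_supp \<phi> \<and> real (Suc n) * enn2real (E \<phi>) < \<bar>\<phi> y0\<bar> powr p"
      by (metis not_le of_nat_0_less_iff zero_less_Suc)
    then obtain \<phi> where fs: "\<And>n. fin_supp (\<phi> n)"
      and big: "\<And>n. real (Suc n) * enn2real (E (\<phi> n)) < \<bar>\<phi> n y0\<bar> powr p"
      by metis
    define \<psi> where "\<psi> = (\<lambda>n x. (1 / \<phi> n y0) * \<phi> n x)"
    have a0: "\<phi> n y0 \<noteq> 0" for n
    proof
      assume "\<phi> n y0 = 0"
      then have "real (Suc n) * enn2real (E (\<phi> n)) < 0" using big[of n] p1 by simp
      moreover have "0 \<le> real (Suc n) * enn2real (E (\<phi> n))" by simp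
      ultimately show False by linarith
    qed
    have \<psi>fs: "fin_supp (\<psi> n)" for n unfolding \<psi>_def using fs by (rule fin_supp_scale)
    have \<psi>y: "\<psi> n y0 = 1" for n unfolding \<psi>_def using a0 by simp
    have \<psi>W: "W (\<psi> n) \<le> ennreal (2 / real (Suc n))" for n
    proof -
      define w where "w = enn2real (W (\<phi> n))"
      have w0: "0 \<le> w" unfolding w_def by simp
      have Ww: "W (\<phi> n) = ennreal w" unfolding w_def using W_fin[OF fs[of n]] by (rule W_real)
      have "ennreal w / 2 = ennreal (w / 2)"
        using w0 divide_ennreal[of w 2] by simp
      then have Ee: "enn2real (E (\<phi> n)) = w / 2" unfolding E_W Ww using w0 by simp
      have ap: "0 < \<bar>\<phi> n y0\<bar> powr p" using a0 by simp
      have "real (Suc n) * (w / 2) < \<bar>\<phi> n y0\<bar> powr p" using big[of n] Ee by simp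
      then have "w / \<bar>\<phi> n y0\<bar> powr p < 2 / real (Suc n)"
        using ap by (simp add: field_simps)
      moreover have "W (\<psi> n) = ennreal (w / \<bar>\<phi> n y0\<bar> powr p)"
        unfolding \<psi>_def W_scale Ww using w0 a0
        by (simp add: ennreal_mult'[symmetric] powr_divide abs_divide divide_inverse mult.commute inverse_powr)
      ultimately show ?thesis by (simp add: ennreal_leI less_imp_le)
    qed
    have "(\<lambda>n. W (\<psi> n)) \<longlonglongrightarrow> 0"
    proof (rule tendsto_sandwich[of "\<lambda>_. 0" _ _ "\<lambda>n. ennreal (2 / real (Suc n))"])
      show "\<forall>\<^sub>F n in sequentially. W (\<psi> n) \<le> ennreal (2 / real (Suc n))"
        using \<psi>W by (intro always_eventually allI)
      have "(\<lambda>n. 2 * (1 / real (Suc n))) \<longlonglongrightarrow> 2 * 0"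
        by (intro tendsto_mult tendsto_const LIMSEQ_inverse_real_of_nat[unfolded inverse_eq_divide])
      then show "(\<lambda>n. ennreal (2 / real (Suc n))) \<longlonglongrightarrow> 0"
        using tendsto_ennrealI[of "\<lambda>n. 2 * (1 / real (Suc n))" 0] by simp
    qed auto
    then have "p_parabolic b (\<lambda>_. 0) p" by (rule core_parabolic[OF \<psi>fs, of _ y0]) (simp add: \<psi>y)
    then show False using nP by simp
  qed
  then obtain C where C: "C > 0" and Cb: "\<And>\<phi>. fin_supp \<phi> \<Longrightarrow> \<bar>\<phi> y0\<bar> powr p \<le> C * enn2real (E \<phi>)"
    by blast
  have main: "1 * enn2real (E \<phi>) powr (1 / p) \<le> normo b (\<lambda>_. 0) p y0 \<phi> \<and>
      normo b (\<lambda>_. 0) p y0 \<phi> \<le> (1 + C) powr (1 / p) * enn2real (E \<phi>) powr (1 / p)"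
    if fs: "fin_supp \<phi>" for \<phi>
  proof
    define t where "t = enn2real (E \<phi>)"
    have t0: "0 \<le> t" unfolding t_def by simp
    show "1 * enn2real (E \<phi>) powr (1 / p) \<le> normo b (\<lambda>_. 0) p y0 \<phi>"
      unfolding normo_def t_def[symmetric] using p1 t0 by (simp add: powr_mono2)
    have "normo b (\<lambda>_. 0) p y0 \<phi> \<le> (t + C * t) powr (1 / p)"
      unfolding normo_def t_def[symmetric] using p1 t0 Cb[OF fs] unfolding t_def
      by (intro powr_mono2) auto
    also have "\<dots> = (1 + C) powr (1 / p) * t powr (1 / p)"
      using C t0 by (simp add: powr_mult[symmetric] algebra_simps)
    finally show "normo b (\<lambda>_. 0) p y0 \<phi> \<le> (1 + C) powr (1 / p) * enn2real (E \<phi>) powr (1 / p)"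
      by (simp add: t_def)
  qed
  have "(0::real) < 1" "0 < (1 + C) powr (1 / p)" using C by auto
  then show ?thesis unfolding equiv_functionals_def using main by blast
qed

end

lemma exists_mu:
  fixes p :: real
  assumes "countable (UNIV :: 'x set)"
  shows "\<exists>\<mu> :: 'x \<Rightarrow> real. (\<forall>x. 0 < \<mu> x) \<and> (\<lambda>_. 1) \<in> lp p \<mu>"
proof -
  define h where "h = to_nat_on (UNIV :: 'x set)"
  have inj: "inj_on h UNIV" unfolding h_def using assms by (rule inj_on_to_nat_on)
  define g :: "nat \<Rightarrow> real" where "g = (\<lambda>n. (1/2) ^ n)"
  have "g summable_on UNIV"
    by (subst summable_on_UNIV_nonneg_real_iff) (auto simp: g_def summable_geometric)
  then have "g summable_on (h ` UNIV)" by (rule summable_on_subset_banach) simp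
  then have "(g \<circ> h) summable_on UNIV" using summable_on_reindex[OF inj] by blast
  then have "(\<lambda>x. \<bar>1::real\<bar> powr p * (g \<circ> h) x) summable_on UNIV" by (simp add: comp_def)
  moreover have "\<forall>x. 0 < (g \<circ> h) x" by (simp add: g_def)
  ultimately show ?thesis unfolding lp_def by blast
qed


context wg
begin

lemma W_E2: "W f = 2 * E f"
  unfolding E_W by (simp add: ennreal_times_divide mult.commute[of 2] mult_divide_eq_ennreal)

lemma main:
  shows
    "(p_parabolic b (\<lambda>_. 0) p \<longleftrightarrow> Dp b (\<lambda>_. 0) p = D0p b (\<lambda>_. 0) p x0)
   \<and> (p_parabolic b (\<lambda>_. 0) p \<longleftrightarrow>
        (\<forall>\<mu>::'x \<Rightarrow> real. (\<forall>x. 0 < \<mu> x) \<longrightarrow>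
            Dp b (\<lambda>_. 0) p \<inter> lp p \<mu> = D0p b (\<lambda>_. 0) p x0 \<inter> lp p \<mu>))
   \<and> (p_parabolic b (\<lambda>_. 0) p \<longleftrightarrow> (\<lambda>_. 1) \<in> D0p b (\<lambda>_. 0) p x0)
   \<and> (p_parabolic b (\<lambda>_. 0) p \<longleftrightarrow>
        (\<exists>e :: nat \<Rightarrow> 'x \<Rightarrow> real. (\<forall>n. fin_supp (e n)) \<and> (\<forall>n x. 0 \<le> e n x)
            \<and> (\<forall>n x. e n x \<le> e (Suc n) x) \<and> (\<forall>x. (\<lambda>n. e n x) \<longlonglongrightarrow> 1)
            \<and> (\<lambda>n. energy b (\<lambda>_. 0) p (e n)) \<longlonglongrightarrow> 0))
   \<and> (p_parabolic b (\<lambda>_. 0) p \<longleftrightarrow>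
        (\<exists>e :: nat \<Rightarrow> 'x \<Rightarrow> real. (\<forall>n. fin_supp (e n)) \<and> (\<forall>x. (\<lambda>n. e n x) \<longlonglongrightarrow> 1)
            \<and> (SUP n. energy b (\<lambda>_. 0) p (e n)) < \<infinity>))
   \<and> (p_parabolic b (\<lambda>_. 0) p \<longleftrightarrow>
        (\<exists>u\<in>D0p b (\<lambda>_. 0) p x0. \<exists>K. finite K \<and> (INF x\<in>UNIV - K. ereal (u x)) > 0))
   \<and> (p_parabolic b (\<lambda>_. 0) p \<longleftrightarrow> (\<exists>y0. \<not> equiv_functionals b (\<lambda>_. 0) p y0))
   \<and> (p_parabolic b (\<lambda>_. 0) p \<longleftrightarrow> (\<forall>y0. \<not> equiv_functionals b (\<lambda>_. 0) p y0))"
proof -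
  let ?P = "p_parabolic b (\<lambda>_. 0) p"
  have one_Dp: "(\<lambda>_. 1::real) \<in> Dp b (\<lambda>_. 0) p" by (simp add: Dp_iff W_one)
  have D0_sub: "D0p b (\<lambda>_. 0) p x0 \<subseteq> Dp b (\<lambda>_. 0) p" unfolding D0p_def by blast
  have PD: "Dp b (\<lambda>_. 0) p = D0p b (\<lambda>_. 0) p x0" if P: ?P
  proof
    show "Dp b (\<lambda>_. 0) p \<subseteq> D0p b (\<lambda>_. 0) p x0"
    proof
      fix f assume "f \<in> Dp b (\<lambda>_. 0) p"
      then show "f \<in> D0p b (\<lambda>_. 0) p x0" using para_D0[OF P] by (simp add: Dp_iff)
    qed
  qed (rule D0_sub)
  have i_ii: "?P \<longleftrightarrow> Dp b (\<lambda>_. 0) p = D0p b (\<lambda>_. 0) p x0"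
    using PD one_Dp D0_one_parabolic by blast
  have i_iii: "?P \<longleftrightarrow> (\<forall>\<mu>::'x \<Rightarrow> real. (\<forall>x. 0 < \<mu> x) \<longrightarrow>
            Dp b (\<lambda>_. 0) p \<inter> lp p \<mu> = D0p b (\<lambda>_. 0) p x0 \<inter> lp p \<mu>)"
  proof
    assume ?P then show "\<forall>\<mu>::'x \<Rightarrow> real. (\<forall>x. 0 < \<mu> x) \<longrightarrow>
            Dp b (\<lambda>_. 0) p \<inter> lp p \<mu> = D0p b (\<lambda>_. 0) p x0 \<inter> lp p \<mu>" using PD by simp
  next
    assume H: "\<forall>\<mu>::'x \<Rightarrow> real. (\<forall>x. 0 < \<mu> x) \<longrightarrow>
            Dp b (\<lambda>_. 0) p \<inter> lp p \<mu> = D0p b (\<lambda>_. 0) p x0 \<inter> lp p \<mu>"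
    obtain \<mu> :: "'x \<Rightarrow> real" where \<mu>: "\<forall>x. 0 < \<mu> x" "(\<lambda>_. 1) \<in> lp p \<mu>"
      using exists_mu[OF cntbl, of p] by blast
    have "(\<lambda>_. 1::real) \<in> Dp b (\<lambda>_. 0) p \<inter> lp p \<mu>" using one_Dp \<mu>(2) by blast
    then have "(\<lambda>_. 1::real) \<in> D0p b (\<lambda>_. 0) p x0" using H \<mu>(1) by blast
    then show ?P by (rule D0_one_parabolic)
  qed
  have i_iv: "?P \<longleftrightarrow> (\<lambda>_. 1) \<in> D0p b (\<lambda>_. 0) p x0"
    using para_one_D0 D0_one_parabolic by blast
  have i_v: "?P \<longleftrightarrow>
        (\<exists>e :: nat \<Rightarrow> 'x \<Rightarrow> real. (\<forall>n. fin_supp (e n)) \<and> (\<forall>n x. 0 \<le> e n x)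
            \<and> (\<forall>n x. e n x \<le> e (Suc n) x) \<and> (\<forall>x. (\<lambda>n. e n x) \<longlonglongrightarrow> 1)
            \<and> (\<lambda>n. energy b (\<lambda>_. 0) p (e n)) \<longlonglongrightarrow> 0)"
  proof
    assume P: ?P
    obtain e where fs: "\<forall>n. fin_supp (e n)" and e01: "\<forall>n x. 0 \<le> e n x \<and> e n x \<le> 1"
      and mono: "\<forall>n x. e n x \<le> e (Suc n) x" and ev1: "\<forall>x. eventually (\<lambda>n. e n x = 1) sequentially"
      and Wlt: "\<forall>n. W (e n) < ennreal (1 / real (Suc n))"
      using para_seq[OF P] by blast
    have lim: "(\<lambda>n. e n x) \<longlonglongrightarrow> 1" for x by (rule tendsto_eventually) (use ev1 in blast)
    have W0: "(\<lambda>n. W (e n)) \<longlonglongrightarrow> 0" using seq_W0 Wlt by blast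
    have "(\<lambda>n. W (e n) * inverse 2) \<longlonglongrightarrow> 0 * inverse 2"
      by (rule tendsto_mult_ennreal[OF W0]) auto
    then have "(\<lambda>n. E (e n)) \<longlonglongrightarrow> 0" by (simp add: E_W divide_ennreal_def)
    then show "\<exists>e :: nat \<Rightarrow> 'x \<Rightarrow> real. (\<forall>n. fin_supp (e n)) \<and> (\<forall>n x. 0 \<le> e n x)
            \<and> (\<forall>n x. e n x \<le> e (Suc n) x) \<and> (\<forall>x. (\<lambda>n. e n x) \<longlonglongrightarrow> 1)
            \<and> (\<lambda>n. energy b (\<lambda>_. 0) p (e n)) \<longlonglongrightarrow> 0"
      using fs e01 mono lim by blast
  next
    assume "\<exists>e :: nat \<Rightarrow> 'x \<Rightarrow> real. (\<forall>n. fin_supp (e n)) \<and> (\<forall>n x. 0 \<le> e n x)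
            \<and> (\<forall>n x. e n x \<le> e (Suc n) x) \<and> (\<forall>x. (\<lambda>n. e n x) \<longlonglongrightarrow> 1)
            \<and> (\<lambda>n. energy b (\<lambda>_. 0) p (e n)) \<longlonglongrightarrow> 0"
    then obtain e :: "nat \<Rightarrow> 'x \<Rightarrow> real" where fs: "\<And>n. fin_supp (e n)"
      and lim: "\<And>x. (\<lambda>n. e n x) \<longlonglongrightarrow> 1" and E0: "(\<lambda>n. E (e n)) \<longlonglongrightarrow> 0" by blast
    have "(\<lambda>n. 2 * E (e n)) \<longlonglongrightarrow> 2 * 0" by (rule ennreal_tendsto_cmult[OF _ E0]) simp
    then have "(\<lambda>n. W (e n)) \<longlonglongrightarrow> 0" by (simp add: W_E2)
    then show ?P by (rule core_parabolic[OF fs _ lim])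
  qed
  have i_vi: "?P \<longleftrightarrow>
        (\<exists>e :: nat \<Rightarrow> 'x \<Rightarrow> real. (\<forall>n. fin_supp (e n)) \<and> (\<forall>x. (\<lambda>n. e n x) \<longlonglongrightarrow> 1)
            \<and> (SUP n. energy b (\<lambda>_. 0) p (e n)) < \<infinity>)"
  proof
    assume P: ?P
    obtain e where fs: "\<forall>n. fin_supp (e n)"
      and ev1: "\<forall>x. eventually (\<lambda>n. e n x = 1) sequentially"
      and Wlt: "\<forall>n. W (e n) < ennreal (1 / real (Suc n))"
      using para_seq[OF P] by blast
    have lim: "(\<lambda>n. e n x) \<longlonglongrightarrow> 1" for x by (rule tendsto_eventually) (use ev1 in blast)
    have "E (e n) \<le> 1" for n
    proof -
      have "E (e n) \<le> W (e n)" unfolding W_E2 by (simp add: mult_2 add_increasing)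
      also have "\<dots> \<le> ennreal (1 / real (Suc n))" using Wlt less_imp_le by blast
      also have "\<dots> \<le> 1" by simp
      finally show ?thesis .
    qed
    then have "(SUP n. E (e n)) \<le> 1" by (rule SUP_least)
    then have "(SUP n. E (e n)) < \<infinity>" by (simp add: le_less_trans)
    then show "\<exists>e :: nat \<Rightarrow> 'x \<Rightarrow> real. (\<forall>n. fin_supp (e n)) \<and> (\<forall>x. (\<lambda>n. e n x) \<longlonglongrightarrow> 1)
            \<and> (SUP n. energy b (\<lambda>_. 0) p (e n)) < \<infinity>" using fs lim by blast
  next
    assume "\<exists>e :: nat \<Rightarrow> 'x \<Rightarrow> real. (\<forall>n. fin_supp (e n)) \<and> (\<forall>x. (\<lambda>n. e n x) \<longlonglongrightarrow> 1)
            \<and> (SUP n. energy b (\<lambda>_. 0) p (e n)) < \<infinity>"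
    then obtain e :: "nat \<Rightarrow> 'x \<Rightarrow> real" where fs: "\<And>n. fin_supp (e n)"
      and lim: "\<And>x. (\<lambda>n. e n x) \<longlonglongrightarrow> 1" and S: "(SUP n. E (e n)) < \<infinity>" by blast
    define M where "M = 2 * enn2real (SUP n. E (e n))"
    have M0: "0 \<le> M" unfolding M_def by simp
    have "W (e n) \<le> ennreal M" for n
    proof -
      have "E (e n) \<le> (SUP n. E (e n))" by (rule SUP_upper) simp
      also have "\<dots> = ennreal (enn2real (SUP n. E (e n)))" using S by (simp add: less_top[symmetric])
      finally have "2 * E (e n) \<le> 2 * ennreal (enn2real (SUP n. E (e n)))" by (rule mult_left_mono) simp
      then show ?thesis unfolding W_E2 M_def by (simp add: ennreal_mult')
    qed
    then show ?P by (rule bounded_seq_parabolic[OF fs lim _ M0])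
  qed
  have i_vii: "?P \<longleftrightarrow>
        (\<exists>u\<in>D0p b (\<lambda>_. 0) p x0. \<exists>K. finite K \<and> (INF x\<in>UNIV - K. ereal (u x)) > 0)"
  proof
    assume P: ?P
    have "(INF x\<in>UNIV - {}. ereal ((\<lambda>_. 1::real) x)) > 0" by simp
    then have "finite {} \<and> (INF x\<in>UNIV - {}. ereal ((\<lambda>_. 1::real) x)) > 0" by simp
    then have ex: "\<exists>K. finite K \<and> (INF x\<in>UNIV - K. ereal ((\<lambda>_. 1::real) x)) > 0" by (rule exI)
    show "\<exists>u\<in>D0p b (\<lambda>_. 0) p x0. \<exists>K. finite K \<and> (INF x\<in>UNIV - K. ereal (u x)) > 0"
    proof (rule bexI[of _ "\<lambda>_. 1"])
      show "\<exists>K. finite K \<and> (INF x\<in>UNIV - K. ereal ((\<lambda>_. 1::real) x)) > 0" by (rule ex)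
      show "(\<lambda>_. 1) \<in> D0p b (\<lambda>_. 0) p x0" by (rule para_one_D0[OF P])
    qed
  next
    assume "\<exists>u\<in>D0p b (\<lambda>_. 0) p x0. \<exists>K. finite K \<and> (INF x\<in>UNIV - K. ereal (u x)) > 0"
    then obtain u K where "u \<in> D0p b (\<lambda>_. 0) p x0" "finite K" "(INF x\<in>UNIV - K. ereal (u x)) > 0"
      by blast
    then show ?P by (rule vii_parabolic)
  qed
  have i_viii: "?P \<longleftrightarrow> (\<exists>y0. \<not> equiv_functionals b (\<lambda>_. 0) p y0)"
  proof
    assume ?P then show "\<exists>y0. \<not> equiv_functionals b (\<lambda>_. 0) p y0" using para_not_equiv by blast
  next
    assume "\<exists>y0. \<not> equiv_functionals b (\<lambda>_. 0) p y0"
    then obtain y0 where "\<not> equiv_functionals b (\<lambda>_. 0) p y0" by blast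
    then show ?P using nonpara_equiv[of y0] by blast
  qed
  have i_ix: "?P \<longleftrightarrow> (\<forall>y0. \<not> equiv_functionals b (\<lambda>_. 0) p y0)"
  proof
    assume ?P then show "\<forall>y0. \<not> equiv_functionals b (\<lambda>_. 0) p y0" using para_not_equiv by blast
  next
    assume "\<forall>y0. \<not> equiv_functionals b (\<lambda>_. 0) p y0"
    then have "\<not> equiv_functionals b (\<lambda>_. 0) p x0" by blast
    then show ?P using nonpara_equiv[of x0] by blast
  qed
  show ?thesis by (intro conjI i_ii i_iii i_iv i_v i_vi i_vii i_viii i_ix)
qed

end

theorem proposition3p3:
  fixes b :: "'x \<Rightarrow> 'x \<Rightarrow> real" and m c :: "'x \<Rightarrow> real" and p :: real and x0 :: 'x
  assumes G: "weighted_graph b m c"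
    and c0: "\<forall>x. c x = 0"
    and p: "1 < p"
  shows
    "(p_parabolic b c p \<longleftrightarrow> Dp b c p = D0p b c p x0)
   \<and> (p_parabolic b c p \<longleftrightarrow>
        (\<forall>\<mu>::'x \<Rightarrow> real. (\<forall>x. 0 < \<mu> x) \<longrightarrow>
            Dp b c p \<inter> lp p \<mu> = D0p b c p x0 \<inter> lp p \<mu>))
   \<and> (p_parabolic b c p \<longleftrightarrow> (\<lambda>_. 1) \<in> D0p b c p x0)
   \<and> (p_parabolic b c p \<longleftrightarrow>
        (\<exists>e :: nat \<Rightarrow> 'x \<Rightarrow> real. (\<forall>n. fin_supp (e n)) \<and> (\<forall>n x. 0 \<le> e n x)
            \<and> (\<forall>n x. e n x \<le> e (Suc n) x) \<and> (\<forall>x. (\<lambda>n. e n x) \<longlonglongrightarrow> 1)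
            \<and> (\<lambda>n. energy b c p (e n)) \<longlonglongrightarrow> 0))
   \<and> (p_parabolic b c p \<longleftrightarrow>
        (\<exists>e :: nat \<Rightarrow> 'x \<Rightarrow> real. (\<forall>n. fin_supp (e n)) \<and> (\<forall>x. (\<lambda>n. e n x) \<longlonglongrightarrow> 1)
            \<and> (SUP n. energy b c p (e n)) < \<infinity>))
   \<and> (p_parabolic b c p \<longleftrightarrow>
        (\<exists>u\<in>D0p b c p x0. \<exists>K. finite K \<and> (INF x\<in>UNIV - K. ereal (u x)) > 0))
   \<and> (p_parabolic b c p \<longleftrightarrow> (\<exists>y0. \<not> equiv_functionals b c p y0))
   \<and> (p_parabolic b c p \<longleftrightarrow> (\<forall>y0. \<not> equiv_functionals b c p y0))"
proof -
  have c: "c = (\<lambda>_. 0)" using c0 by auto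
  have "wg b p"
  proof
    show "\<And>x y. b x y = b y x" "\<And>x y. 0 \<le> b x y" "\<And>x. (\<lambda>y. b x y) summable_on UNIV"
      "\<And>x y. (x, y) \<in> {(x, y). 0 < b x y}\<^sup>*" "countable (UNIV :: 'x set)"
      using G unfolding weighted_graph_def by blast+
  qed (rule p)
  then show ?thesis unfolding c by (rule wg.main)
qed


end
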